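(* Let $G$ be a countable group equipped with symmetric probability measures $\mu_0,\dots,\mu_k$. Assume there is a constant $C>0$ such that for each $R>0$ and each $0\le i\le k$ there is a subset $K_i(R)\subset G$ with $$\sum_{x\in G}|f(xh)-f(x)|^2\le CR\,\mathcal E_{G,\mu_i}(f,f)\qquad\text{for all } f\in L^2(G),\ h\in K_i(R).$$ Assume further that there are an integer $Q\ge1$ and a positive increasing function $\mathbf F$, regularly varying of positive index at infinity, with inverse $\mathbf F^{-1}$, such that $\#\big(\bigcup_{i=0}^kK_i(R)\big)^Q\ge\mathbf F(R)$ for all $R\ge1$, where $A^Q=\{g_1\cdots g_Q: g_j\in A\}$. Let $\mu=(k+1)^{-1}\sum_{i=0}^k\mu_i$. Then $\Lambda_{2,G,\mu}\succeq 1/\mathbf F^{-1}$ on $[1,\infty)$ and $\mu^{(2n)}(e)\preceq 1/\mathbf F(n)$ for $n=1,2,\dots$.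
   Context: Notation. For positive functions on $D=[1,\infty)$ or $D=\{1,2,\dots\}$, $f_1\preceq f_2$ means there are constants $c_1,c_2>0$ with $f_1(t)\le c_1f_2(c_2t)$ for all $t\in D$ (with $c_2t$ replaced by $\max(c_2t,1)$, resp. a nearby integer). A positive function $f$ is regularly varying of index $\gamma$ at infinity if $f(\lambda t)/f(t)\to\lambda^\gamma$ as $t\to\infty$ for every $\lambda>0$. $\mu^{(n)}$ is the $n$-fold convolution power ($u*v(x)=\sum_yu(y)v(y^{-1}x)$), $e$ the identity; $\mu$ symmetric means $\mu(g^{-1})=\mu(g)$. Dirichlet form and spectral profile. $\mathcal E_{G,\mu}(f,f)=\frac12\sum_{x,y\in G}|f(xy)-f(x)|^2\mu(y)$ for $f\in L^2(G)$ (counting measure), and $\Lambda_{2,G,\mu}(v)=\min\{\mathcal E_{G,\mu}(f,f)/\|f\|_2^2:\ 1\le \#\mathrm{supp}(f)\le v\}$ for $v\ge1$. *)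

theory Defs
  imports "HOL-Analysis.Analysis" "HOL-Algebra.Group"
begin

definition prob_meas :: "('a, 'b) monoid_scheme \<Rightarrow> ('a \<Rightarrow> real) \<Rightarrow> bool" where
  "prob_meas G m \<longleftrightarrow> (\<forall>x\<in>carrier G. m x \<ge> 0) \<and> (m has_sum 1) (carrier G)"

definition sym_meas :: "('a, 'b) monoid_scheme \<Rightarrow> ('a \<Rightarrow> real) \<Rightarrow> bool" where
  "sym_meas G m \<longleftrightarrow> (\<forall>x\<in>carrier G. m (inv\<^bsub>G\<^esub> x) = m x)"

definition L2 :: "('a, 'b) monoid_scheme \<Rightarrow> ('a \<Rightarrow> real) set" where
  "L2 G = {f. (\<lambda>x. (f x)\<^sup>2) summable_on carrier G}"

definition norm2sq :: "('a, 'b) monoid_scheme \<Rightarrow> ('a \<Rightarrow> real) \<Rightarrow> real" where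
  "norm2sq G f = (\<Sum>\<^sub>\<infinity>x\<in>carrier G. (f x)\<^sup>2)"

definition dirichlet :: "('a, 'b) monoid_scheme \<Rightarrow> ('a \<Rightarrow> real) \<Rightarrow> ('a \<Rightarrow> real) \<Rightarrow> real" where
  "dirichlet G m f = (\<Sum>\<^sub>\<infinity>(x,y)\<in>carrier G \<times> carrier G. (f (x \<otimes>\<^bsub>G\<^esub> y) - f x)\<^sup>2 * m y) / 2"

definition supp_G :: "('a, 'b) monoid_scheme \<Rightarrow> ('a \<Rightarrow> real) \<Rightarrow> 'a set" where
  "supp_G G f = {x\<in>carrier G. f x \<noteq> 0}"

text \<open>Spectral profile Lambda_{2,G,mu}(v) (the minimum written as an infimum).\<close>
definition spectral_profile :: "('a, 'b) monoid_scheme \<Rightarrow> ('a \<Rightarrow> real) \<Rightarrow> real \<Rightarrow> real" where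
  "spectral_profile G m v = Inf {dirichlet G m f / norm2sq G f | f.
      finite (supp_G G f) \<and> 1 \<le> card (supp_G G f) \<and> real (card (supp_G G f)) \<le> v}"

definition conv :: "('a, 'b) monoid_scheme \<Rightarrow> ('a \<Rightarrow> real) \<Rightarrow> ('a \<Rightarrow> real) \<Rightarrow> 'a \<Rightarrow> real" where
  "conv G u v x = (\<Sum>\<^sub>\<infinity>y\<in>carrier G. u y * v (inv\<^bsub>G\<^esub> y \<otimes>\<^bsub>G\<^esub> x))"

fun conv_pow :: "('a, 'b) monoid_scheme \<Rightarrow> ('a \<Rightarrow> real) \<Rightarrow> nat \<Rightarrow> 'a \<Rightarrow> real" where
  "conv_pow G m 0 = (\<lambda>x. if x = \<one>\<^bsub>G\<^esub> then 1 else 0)"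
| "conv_pow G m (Suc n) = conv G (conv_pow G m n) m"

definition set_power :: "('a, 'b) monoid_scheme \<Rightarrow> 'a set \<Rightarrow> nat \<Rightarrow> 'a set" where
  "set_power G A Q = {foldr (\<lambda>g h. g \<otimes>\<^bsub>G\<^esub> h) gs \<one>\<^bsub>G\<^esub> | gs. length gs = Q \<and> set gs \<subseteq> A}"

definition regularly_varying :: "(real \<Rightarrow> real) \<Rightarrow> real \<Rightarrow> bool" where
  "regularly_varying f \<gamma> \<longleftrightarrow>
     (\<forall>\<^sub>F t in at_top. f t > 0) \<and>
     (\<forall>c>0. ((\<lambda>t. f (c * t) / f t) \<longlongrightarrow> c powr \<gamma>) at_top)"

definition dom_real :: "(real \<Rightarrow> real) \<Rightarrow> (real \<Rightarrow> real) \<Rightarrow> bool" where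
  "dom_real f1 f2 \<longleftrightarrow> (\<exists>c1>0. \<exists>c2>0. \<forall>t\<ge>1. f1 t \<le> c1 * f2 (max (c2 * t) 1))"

text \<open>f1 \<preceq> f2 on {1,2,...}; c2 n replaced by the integer max 1 (ceiling (c2 n)).\<close>
definition dom_nat :: "(nat \<Rightarrow> real) \<Rightarrow> (nat \<Rightarrow> real) \<Rightarrow> bool" where
  "dom_nat f1 f2 \<longleftrightarrow> (\<exists>c1>0. \<exists>c2>0. \<forall>n\<ge>1. f1 n \<le> c1 * f2 (max 1 (nat \<lceil>c2 * real n\<rceil>)))"

end

theory Submission
  imports Defs
begin

lemma L2_iff: "f \<in> L2 G \<longleftrightarrow> (\<lambda>x. (f x)\<^sup>2) summable_on carrier G"
  by (simp add: L2_def)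

lemma L2_mult:
  assumes "f \<in> L2 G" "g \<in> L2 G"
  shows "(\<lambda>x. f x * g x) summable_on carrier G"
proof -
  have "(\<lambda>x. norm (f x * f x)) summable_on carrier G"
    using assms(1) by (simp add: L2_def power2_eq_square)
  moreover have "(\<lambda>x. norm (g x * g x)) summable_on carrier G"
    using assms(2) by (simp add: L2_def power2_eq_square)
  ultimately have "(\<lambda>x. norm (f x * g x)) summable_on carrier G"
    by (rule abs_summable_product)
  then show ?thesis using summable_on_iff_abs_summable_on_real by blast
qed

lemma L2_add:
  assumes "f \<in> L2 G" "g \<in> L2 G"
  shows "(\<lambda>x. f x + g x) \<in> L2 G"
proof -
  have "(\<lambda>x. (f x)\<^sup>2 + 2 * (f x * g x) + (g x)\<^sup>2) summable_on carrier G"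
    by (intro summable_on_add summable_on_cmult_right L2_mult assms)
       (use assms in \<open>auto simp: L2_def\<close>)
  then show ?thesis by (simp add: L2_def power2_eq_square algebra_simps)
qed

lemma L2_cmult:
  assumes "f \<in> L2 G"
  shows "(\<lambda>x. c * f x) \<in> L2 G"
proof -
  have "(\<lambda>x. c\<^sup>2 * (f x)\<^sup>2) summable_on carrier G"
    by (intro summable_on_cmult_right) (use assms in \<open>auto simp: L2_def\<close>)
  then show ?thesis by (simp add: L2_def power_mult_distrib)
qed

lemma L2_diff:
  assumes "f \<in> L2 G" "g \<in> L2 G"
  shows "(\<lambda>x. f x - g x) \<in> L2 G"
  using L2_add[OF assms(1) L2_cmult[OF assms(2), of "-1"]] by simp

lemma L2_finite:
  assumes "finite {x\<in>carrier G. f x \<noteq> 0}"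
  shows "f \<in> L2 G"
  unfolding L2_def
  by (auto intro!: finite_nonzero_values_imp_summable_on rev_finite_subset[OF assms])

definition ip :: "('a, 'b) monoid_scheme \<Rightarrow> ('a \<Rightarrow> real) \<Rightarrow> ('a \<Rightarrow> real) \<Rightarrow> real" where
  "ip G f g = (\<Sum>\<^sub>\<infinity>x\<in>carrier G. f x * g x)"

lemma ip_sym: "ip G f g = ip G g f"
  by (simp add: ip_def mult.commute)

lemma norm2sq_ip: "norm2sq G f = ip G f f"
  by (simp add: ip_def norm2sq_def power2_eq_square)

lemma ip_add_left:
  assumes "f \<in> L2 G" "g \<in> L2 G" "h \<in> L2 G"
  shows "ip G (\<lambda>x. f x + g x) h = ip G f h + ip G g h"
  unfolding ip_def distrib_right
  by (rule infsum_add) (auto intro: L2_mult assms)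

lemma ip_cmult_left:
  shows "ip G (\<lambda>x. c * f x) h = c * ip G f h"
  unfolding ip_def mult.assoc by (rule infsum_cmult_right')

lemma ip_diff_left:
  assumes "f \<in> L2 G" "g \<in> L2 G" "h \<in> L2 G"
  shows "ip G (\<lambda>x. f x - g x) h = ip G f h - ip G g h"
  using ip_add_left[OF assms(1) L2_cmult[OF assms(2), of "-1"] assms(3)] ip_cmult_left[where c="-1" and f=g and G=G and h=h]
  by simp

lemma ip_add_right:
  assumes "f \<in> L2 G" "g \<in> L2 G" "h \<in> L2 G"
  shows "ip G h (\<lambda>x. f x + g x) = ip G h f + ip G h g"
  using ip_add_left[OF assms] by (simp add: ip_sym)

lemma ip_diff_right:
  assumes "f \<in> L2 G" "g \<in> L2 G" "h \<in> L2 G"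
  shows "ip G h (\<lambda>x. f x - g x) = ip G h f - ip G h g"
  using ip_diff_left[OF assms] by (simp add: ip_sym)

lemma ip_self_nonneg: "ip G f f \<ge> 0"
  unfolding ip_def by (rule infsum_nonneg) auto

locale pm = group G for G :: "('a,'b) monoid_scheme" (structure) +
  fixes m :: "'a \<Rightarrow> real"
  assumes m_nn: "x \<in> carrier G \<Longrightarrow> 0 \<le> m x"
    and m_sum: "(m has_sum 1) (carrier G)"
begin

lemma m_summable: "m summable_on carrier G"
  using m_sum by (auto simp: has_sum_iff)

lemma m_infsum: "infsum m (carrier G) = 1"
  using m_sum by (auto simp: has_sum_iff)

lemma transl_has_sum:
  assumes "h \<in> carrier G"
  shows "((\<lambda>x. \<phi> (x \<otimes> h)) has_sum S) (carrier G) \<longleftrightarrow> (\<phi> has_sum S) (carrier G)"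
  by (rule has_sum_reindex_bij_witness[where i = "\<lambda>x. x \<otimes> inv h" and j = "\<lambda>x. x \<otimes> h"])
     (use assms in \<open>auto simp: m_assoc\<close>)

lemma transl_summable:
  assumes "h \<in> carrier G"
  shows "(\<lambda>x. \<phi> (x \<otimes> h)) summable_on carrier G \<longleftrightarrow> \<phi> summable_on carrier G"
  using transl_has_sum[OF assms] unfolding summable_on_def by blast

lemma transl_infsum:
  assumes "h \<in> carrier G"
  shows "(\<Sum>\<^sub>\<infinity>x\<in>carrier G. \<phi> (x \<otimes> h)) = infsum \<phi> (carrier G)"
  by (rule infsum_reindex_bij_witness[where i = "\<lambda>x. x \<otimes> inv h" and j = "\<lambda>x. x \<otimes> h"])
     (use assms in \<open>auto simp: m_assoc\<close>)

lemma L2_transl: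
  assumes "h \<in> carrier G" "f \<in> L2 G"
  shows "(\<lambda>x. f (x \<otimes> h)) \<in> L2 G"
  using assms transl_summable[OF assms(1), of "\<lambda>x. (f x)\<^sup>2"] by (simp add: L2_def)

lemma norm_transl:
  assumes "h \<in> carrier G"
  shows "norm2sq G (\<lambda>x. f (x \<otimes> h)) = norm2sq G f"
  unfolding norm2sq_def using transl_infsum[OF assms, of "\<lambda>x. (f x)\<^sup>2"] by simp


end
context pm begin

lemma fubini_nonneg:
  fixes h :: "'x \<times> 'y \<Rightarrow> real"
  assumes nn: "\<And>x y. x \<in> A \<Longrightarrow> y \<in> B x \<Longrightarrow> 0 \<le> h (x, y)"
    and rows: "\<And>x. x \<in> A \<Longrightarrow> ((\<lambda>y. h (x, y)) has_sum g x) (B x)"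
    and tot: "(g has_sum S) A"
  shows "(h has_sum S) (Sigma A B)"
proof -
  have "h summable_on Sigma A B"
    by (rule summable_on_SigmaI[OF rows]) (use tot nn in \<open>auto simp: has_sum_iff\<close>)
  then show ?thesis using has_sum_SigmaI[where g=g, OF rows tot] by blast
qed

lemma pair1:
  assumes "f \<in> L2 G"
  shows "((\<lambda>(x,y). (f (x \<otimes> y))\<^sup>2 * m y) has_sum norm2sq G f) (carrier G \<times> carrier G)"
proof -
  have fs: "((\<lambda>x. (f x)\<^sup>2) has_sum norm2sq G f) (carrier G)"
    using assms by (simp add: L2_def norm2sq_def)
  have "((\<lambda>(y,x). (f (x \<otimes> y))\<^sup>2 * m y) has_sum norm2sq G f) (carrier G \<times> carrier G)"
  proof (rule fubini_nonneg[where g = "\<lambda>y. norm2sq G f * m y"])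
    fix y assume y: "y \<in> carrier G"
    show "((\<lambda>x. case (y, x) of (y, x) \<Rightarrow> (f (x \<otimes> y))\<^sup>2 * m y) has_sum norm2sq G f * m y) (carrier G)"
      using has_sum_cmult_left[OF fs, of "m y"] transl_has_sum[OF y, of "\<lambda>x. (f x)\<^sup>2 * m y"] by simp
  next
    show "((\<lambda>y. norm2sq G f * m y) has_sum norm2sq G f) (carrier G)"
      using has_sum_cmult_right[OF m_sum, of "norm2sq G f"] by simp
  qed (auto intro!: mult_nonneg_nonneg m_nn)
  then show ?thesis by (subst has_sum_swap) simp
qed

lemma pair2:
  assumes "f \<in> L2 G"
  shows "((\<lambda>(x,y). (f x)\<^sup>2 * m y) has_sum norm2sq G f) (carrier G \<times> carrier G)"
proof -
  have fs: "((\<lambda>x. (f x)\<^sup>2) has_sum norm2sq G f) (carrier G)"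
    using assms by (simp add: L2_def norm2sq_def)
  show ?thesis
  proof (rule fubini_nonneg[where g = "\<lambda>x. (f x)\<^sup>2"])
    fix x assume x: "x \<in> carrier G"
    show "((\<lambda>y. case (x, y) of (x, y) \<Rightarrow> (f x)\<^sup>2 * m y) has_sum (f x)\<^sup>2) (carrier G)"
      using has_sum_cmult_right[OF m_sum, of "(f x)\<^sup>2"] by simp
  qed (auto intro!: mult_nonneg_nonneg m_nn fs)
qed

definition BB :: "('a \<Rightarrow> real) \<Rightarrow> ('a \<Rightarrow> real) \<Rightarrow> real" where
  "BB f g = (\<Sum>\<^sub>\<infinity>(x,y)\<in>carrier G \<times> carrier G. f (x \<otimes> y) * g x * m y)"

lemma half_bound: "\<bar>a * b * c\<bar> \<le> (a\<^sup>2 * c + b\<^sup>2 * c) / 2" if "c \<ge> 0" for a b c :: real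
proof -
  have "2 * \<bar>a * b\<bar> \<le> a\<^sup>2 + b\<^sup>2"
  proof -
    have "0 \<le> (\<bar>a\<bar> - \<bar>b\<bar>)\<^sup>2" by simp
    then show ?thesis by (simp add: power2_diff abs_mult)
  qed
  then have "2 * \<bar>a * b\<bar> * c \<le> (a\<^sup>2 + b\<^sup>2) * c" using that by (intro mult_right_mono) auto
  then show ?thesis using that by (simp add: abs_mult algebra_simps)
qed

lemma pair12:
  assumes "f \<in> L2 G" "g \<in> L2 G"
  shows "((\<lambda>(x,y). ((f (x \<otimes> y))\<^sup>2 * m y + (g x)\<^sup>2 * m y) / 2) has_sum (norm2sq G f + norm2sq G g) / 2) (carrier G \<times> carrier G)"
proof -
  have "((\<lambda>p. (case p of (x,y) \<Rightarrow> (f (x \<otimes> y))\<^sup>2 * m y) + (case p of (x,y) \<Rightarrow> (g x)\<^sup>2 * m y)) has_sum norm2sq G f + norm2sq G g) (carrier G \<times> carrier G)"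
    by (rule has_sum_add[OF pair1[OF assms(1)] pair2[OF assms(2)]])
  from has_sum_cmult_left[OF this, of "1/2"] show ?thesis
    by (simp add: case_prod_unfold)
qed

lemma BB_summable:
  assumes "f \<in> L2 G" "g \<in> L2 G"
  shows "(\<lambda>(x,y). f (x \<otimes> y) * g x * m y) summable_on (carrier G \<times> carrier G)"
proof -
  let ?h = "\<lambda>p. case p of (x,y) \<Rightarrow> f (x \<otimes> y) * g x * m y"
  let ?b = "\<lambda>p. case p of (x,y) \<Rightarrow> ((f (x \<otimes> y))\<^sup>2 * m y + (g x)\<^sup>2 * m y) / 2"
  have S: "?b summable_on (carrier G \<times> carrier G)"
    using pair12[OF assms] by (auto simp: has_sum_iff)
  have "(\<lambda>p. \<bar>?h p\<bar>) summable_on (carrier G \<times> carrier G)"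
  proof (rule summable_on_comparison_test[OF S])
    fix p assume "p \<in> carrier G \<times> carrier G"
    then obtain x y where p: "p = (x,y)" "x \<in> carrier G" "y \<in> carrier G" by auto
    have "\<bar>f (x \<otimes> y) * g x * m y\<bar> \<le> ((f (x \<otimes> y))\<^sup>2 * m y + (g x)\<^sup>2 * m y) / 2"
      by (rule half_bound) (use p m_nn in auto)
    then show "\<bar>?h p\<bar> \<le> ?b p" using p by simp
  qed simp
  then have "(\<lambda>p. norm (?h p)) summable_on (carrier G \<times> carrier G)" by simp
  then show ?thesis using summable_on_iff_abs_summable_on_real by blast
qed

lemma BB_bound:
  assumes "f \<in> L2 G"
  shows "\<bar>BB f f\<bar> \<le> norm2sq G f"
proof -
  have S: "(\<lambda>(x,y). f (x \<otimes> y) * f x * m y) summable_on (carrier G \<times> carrier G)"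
    using BB_summable[OF assms assms] .
  have P: "((\<lambda>(x,y). ((f (x \<otimes> y))\<^sup>2 * m y + (f x)\<^sup>2 * m y) / 2) has_sum norm2sq G f) (carrier G \<times> carrier G)"
    using pair12[OF assms assms] by simp
  have "BB f f \<le> norm2sq G f"
    unfolding BB_def
  proof (rule has_sum_mono[OF _ P])
    show "((\<lambda>(x, y). f (x \<otimes> y) * f x * m y) has_sum (\<Sum>\<^sub>\<infinity>(x, y)\<in>carrier G \<times> carrier G. f (x \<otimes> y) * f x * m y)) (carrier G \<times> carrier G)"
      using S by (simp add: has_sum_iff)
  next
    fix p assume "p \<in> carrier G \<times> carrier G"
    then obtain x y where p: "p = (x,y)" "x \<in> carrier G" "y \<in> carrier G" by auto
    have "\<bar>f (x \<otimes> y) * f x * m y\<bar> \<le> ((f (x \<otimes> y))\<^sup>2 * m y + (f x)\<^sup>2 * m y) / 2"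
      by (rule half_bound) (use p m_nn in auto)
    then show "(case p of (x,y) \<Rightarrow> f (x \<otimes> y) * f x * m y) \<le> (case p of (x,y) \<Rightarrow> ((f (x \<otimes> y))\<^sup>2 * m y + (f x)\<^sup>2 * m y) / 2)"
      using p by simp
  qed
  moreover have "- norm2sq G f \<le> BB f f"
  proof -
    have P': "((\<lambda>p. - (case p of (x,y) \<Rightarrow> ((f (x \<otimes> y))\<^sup>2 * m y + (f x)\<^sup>2 * m y) / 2)) has_sum - norm2sq G f) (carrier G \<times> carrier G)"
      using has_sum_cmult_right[OF P, of "-1"] by simp
    show ?thesis
      unfolding BB_def
    proof (rule has_sum_mono[OF P'])
      show "((\<lambda>(x, y). f (x \<otimes> y) * f x * m y) has_sum (\<Sum>\<^sub>\<infinity>(x, y)\<in>carrier G \<times> carrier G. f (x \<otimes> y) * f x * m y)) (carrier G \<times> carrier G)"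
        using S by (simp add: has_sum_iff)
    next
      fix p assume "p \<in> carrier G \<times> carrier G"
      then obtain x y where p: "p = (x,y)" "x \<in> carrier G" "y \<in> carrier G" by auto
      have "\<bar>f (x \<otimes> y) * f x * m y\<bar> \<le> ((f (x \<otimes> y))\<^sup>2 * m y + (f x)\<^sup>2 * m y) / 2"
        by (rule half_bound) (use p m_nn in auto)
      moreover have "- \<bar>f (x \<otimes> y) * f x * m y\<bar> \<le> f (x \<otimes> y) * f x * m y" by linarith
      ultimately show "- (case p of (x,y) \<Rightarrow> ((f (x \<otimes> y))\<^sup>2 * m y + (f x)\<^sup>2 * m y) / 2) \<le> (case p of (x,y) \<Rightarrow> f (x \<otimes> y) * f x * m y)"
        unfolding p prod.case by linarith
    qed
  qed
  ultimately show ?thesis by auto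
qed

lemma BB_add_left:
  assumes "f1 \<in> L2 G" "f2 \<in> L2 G" "g \<in> L2 G"
  shows "BB (\<lambda>x. f1 x + f2 x) g = BB f1 g + BB f2 g"
proof -
  have "BB (\<lambda>x. f1 x + f2 x) g = (\<Sum>\<^sub>\<infinity>p\<in>carrier G \<times> carrier G. (case p of (x,y) \<Rightarrow> f1 (x \<otimes> y) * g x * m y) + (case p of (x,y) \<Rightarrow> f2 (x \<otimes> y) * g x * m y))"
    unfolding BB_def by (rule infsum_cong) (auto simp: algebra_simps)
  also have "\<dots> = BB f1 g + BB f2 g"
    unfolding BB_def by (rule infsum_add) (auto intro: BB_summable assms)
  finally show ?thesis .
qed

lemma BB_add_right:
  assumes "f1 \<in> L2 G" "f2 \<in> L2 G" "g \<in> L2 G"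
  shows "BB g (\<lambda>x. f1 x + f2 x) = BB g f1 + BB g f2"
proof -
  have "BB g (\<lambda>x. f1 x + f2 x) = (\<Sum>\<^sub>\<infinity>p\<in>carrier G \<times> carrier G. (case p of (x,y) \<Rightarrow> g (x \<otimes> y) * f1 x * m y) + (case p of (x,y) \<Rightarrow> g (x \<otimes> y) * f2 x * m y))"
    unfolding BB_def by (rule infsum_cong) (auto simp: algebra_simps)
  also have "\<dots> = BB g f1 + BB g f2"
    unfolding BB_def by (rule infsum_add) (auto intro: BB_summable assms)
  finally show ?thesis .
qed

lemma BB_cmult_left: "BB (\<lambda>x. c * f x) g = c * BB f g"
proof -
  have "BB (\<lambda>x. c * f x) g = (\<Sum>\<^sub>\<infinity>p\<in>carrier G \<times> carrier G. c * (case p of (x,y) \<Rightarrow> f (x \<otimes> y) * g x * m y))"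
    unfolding BB_def by (rule infsum_cong) (auto simp: algebra_simps)
  also have "\<dots> = c * BB f g" unfolding BB_def by (rule infsum_cmult_right')
  finally show ?thesis .
qed

lemma BB_cmult_right: "BB g (\<lambda>x. c * f x) = c * BB g f"
proof -
  have "BB g (\<lambda>x. c * f x) = (\<Sum>\<^sub>\<infinity>p\<in>carrier G \<times> carrier G. c * (case p of (x,y) \<Rightarrow> g (x \<otimes> y) * f x * m y))"
    unfolding BB_def by (rule infsum_cong) (auto simp: algebra_simps)
  also have "\<dots> = c * BB g f" unfolding BB_def by (rule infsum_cmult_right')
  finally show ?thesis .
qed

lemma dirichlet_has_sum:
  assumes "f \<in> L2 G"
  shows "((\<lambda>(x,y). (f (x \<otimes> y) - f x)\<^sup>2 * m y) has_sum (2 * norm2sq G f - 2 * BB f f)) (carrier G \<times> carrier G)"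
proof -
  have B: "((\<lambda>(x,y). f (x \<otimes> y) * f x * m y) has_sum BB f f) (carrier G \<times> carrier G)"
    using BB_summable[OF assms assms] unfolding BB_def by (simp add: has_sum_iff)
  have "((\<lambda>p. ((case p of (x,y) \<Rightarrow> (f (x \<otimes> y))\<^sup>2 * m y) + (case p of (x,y) \<Rightarrow> (f x)\<^sup>2 * m y))
      + (-2) * (case p of (x,y) \<Rightarrow> f (x \<otimes> y) * f x * m y)) has_sum
       ((norm2sq G f + norm2sq G f) + (-2) * BB f f)) (carrier G \<times> carrier G)"
    by (intro has_sum_add has_sum_cmult_right pair1 pair2 B assms)
  then show ?thesis
    by (subst (asm) has_sum_cong[where g="\<lambda>(x,y). (f (x \<otimes> y) - f x)\<^sup>2 * m y"])
       (auto simp: power2_diff algebra_simps)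
qed

lemma dirichlet_eq:
  assumes "f \<in> L2 G"
  shows "dirichlet G m f = norm2sq G f - BB f f"
  using dirichlet_has_sum[OF assms] unfolding dirichlet_def by (simp add: has_sum_iff)

lemma dirichlet_summable:
  assumes "f \<in> L2 G"
  shows "(\<lambda>(x,y). (f (x \<otimes> y) - f x)\<^sup>2 * m y) summable_on (carrier G \<times> carrier G)"
  using dirichlet_has_sum[OF assms] by (auto simp: has_sum_iff)

lemma dirichlet_nonneg: "dirichlet G m f \<ge> 0"
  unfolding dirichlet_def by (auto intro!: infsum_nonneg mult_nonneg_nonneg m_nn)

end


locale spm = pm +
  assumes m_sym: "x \<in> carrier G \<Longrightarrow> m (inv x) = m x"
begin

lemma BB_sym:
  assumes "f \<in> L2 G" "g \<in> L2 G"
  shows "BB f g = BB g f"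
  unfolding BB_def
proof (rule infsum_reindex_bij_witness[where i = "\<lambda>(x,y). (x \<otimes> y, inv y)" and j = "\<lambda>(x,y). (x \<otimes> y, inv y)"])
  fix a assume "a \<in> carrier G \<times> carrier G"
  then obtain x y where a: "a = (x,y)" "x \<in> carrier G" "y \<in> carrier G" by auto
  show "(case case a of (x, y) \<Rightarrow> (x \<otimes> y, inv y) of (x, y) \<Rightarrow> (x \<otimes> y, inv y)) = a"
    using a by (simp add: m_assoc)
  show "(case a of (x, y) \<Rightarrow> (x \<otimes> y, inv y)) \<in> carrier G \<times> carrier G"
    using a by simp
  show "(case case a of (x, y) \<Rightarrow> (x \<otimes> y, inv y) of (x, y) \<Rightarrow> g (x \<otimes> y) * f x * m y) =
        (case a of (x, y) \<Rightarrow> f (x \<otimes> y) * g x * m y)"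
    using a by (simp add: m_assoc m_sym)
qed (auto simp: m_assoc)

lemma ip_conv:
  assumes "f \<in> L2 G" "g \<in> L2 G"
  shows "(\<Sum>\<^sub>\<infinity>x\<in>carrier G. (\<Sum>\<^sub>\<infinity>y\<in>carrier G. f (x \<otimes> y) * m y) * g x) = BB f g"
proof -
  have "(\<Sum>\<^sub>\<infinity>x\<in>carrier G. (\<Sum>\<^sub>\<infinity>y\<in>carrier G. f (x \<otimes> y) * m y) * g x)
      = (\<Sum>\<^sub>\<infinity>x\<in>carrier G. (\<Sum>\<^sub>\<infinity>y\<in>carrier G. (\<lambda>(x,y). f (x \<otimes> y) * g x * m y) (x,y)))"
    by (rule infsum_cong) (simp add: infsum_cmult_right'[symmetric] algebra_simps)
  also have "\<dots> = BB f g"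
    unfolding BB_def by (rule infsum_Sigma_banach) (use BB_summable[OF assms] in simp)
  finally show ?thesis .
qed

abbreviation u :: "nat \<Rightarrow> 'a \<Rightarrow> real" where "u n \<equiv> conv_pow G m n"

lemma conv_Suc:
  assumes x: "x \<in> carrier G"
  shows "u (Suc n) x = (\<Sum>\<^sub>\<infinity>z\<in>carrier G. u n (x \<otimes> z) * m z)"
proof -
  have "u (Suc n) x = (\<Sum>\<^sub>\<infinity>y\<in>carrier G. u n y * m (inv y \<otimes> x))"
    by (simp add: conv_def)
  also have "\<dots> = (\<Sum>\<^sub>\<infinity>z\<in>carrier G. u n (x \<otimes> z) * m z)"
  proof (rule infsum_reindex_bij_witness[where j = "\<lambda>y. inv x \<otimes> y" and i = "\<lambda>z. x \<otimes> z"])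
    fix a assume a: "a \<in> carrier G"
    have "inv (inv x \<otimes> a) = inv a \<otimes> x"
      using a x by (simp add: inv_mult_group)
    then have "m (inv a \<otimes> x) = m (inv x \<otimes> a)"
      using m_sym[of "inv x \<otimes> a"] a x by simp
    then show "u n (x \<otimes> (inv x \<otimes> a)) * m (inv x \<otimes> a) = u n a * m (inv a \<otimes> x)"
      using a x by (simp add: m_assoc[symmetric])
  qed (use x in \<open>auto simp: m_assoc[symmetric]\<close>)
  finally show ?thesis .
qed


lemma delta_infsum:
  fixes g :: "'a \<Rightarrow> real"
  shows "(\<Sum>\<^sub>\<infinity>x\<in>carrier G. (if x = \<one> then 1 else 0) * g x) = g \<one>"
proof -
  have "(\<Sum>\<^sub>\<infinity>x\<in>carrier G. (if x = \<one> then 1 else 0) * g x) = (\<Sum>\<^sub>\<infinity>x\<in>{\<one>}. (if x = \<one> then 1 else 0) * g x)"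
    by (rule infsum_cong_neutral) auto
  then show ?thesis by simp
qed

lemma u0_has_sum: "(u 0 has_sum 1) (carrier G)"
proof -
  have "(u 0 has_sum 1) (carrier G) \<longleftrightarrow> (u 0 has_sum 1) {\<one>}"
    by (rule has_sum_cong_neutral) auto
  moreover have "(u 0 has_sum 1) {\<one>}"
    using has_sum_finite[of "{\<one>}" "u 0"] by simp
  ultimately show ?thesis by blast
qed

lemma u_props: "(\<forall>x\<in>carrier G. 0 \<le> u n x) \<and> (u n has_sum 1) (carrier G)"
proof (induction n)
  case 0
  then show ?case using u0_has_sum by simp
next
  case (Suc n)
  then have nn: "\<And>x. x \<in> carrier G \<Longrightarrow> 0 \<le> u n x" and hs: "(u n has_sum 1) (carrier G)" by auto
  have J: "((\<lambda>(y,x). u n (x \<otimes> y) * m y) has_sum 1) (carrier G \<times> carrier G)"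
  proof (rule fubini_nonneg[where g = m])
    fix y assume y: "y \<in> carrier G"
    show "((\<lambda>x. case (y, x) of (y, x) \<Rightarrow> u n (x \<otimes> y) * m y) has_sum m y) (carrier G)"
      using has_sum_cmult_left[OF hs, of "m y"] transl_has_sum[OF y, of "\<lambda>x. u n x * m y"] by simp
  qed (auto intro!: mult_nonneg_nonneg m_nn nn m_sum)
  then have J': "((\<lambda>(x,y). u n (x \<otimes> y) * m y) has_sum 1) (carrier G \<times> carrier G)"
    by (subst has_sum_swap) simp
  have rows: "\<And>x. x \<in> carrier G \<Longrightarrow> ((\<lambda>y. u n (x \<otimes> y) * m y) has_sum u (Suc n) x) (carrier G)"
  proof -
    fix x assume x: "x \<in> carrier G"
    have "(\<lambda>y. u n (x \<otimes> y) * m y) summable_on carrier G"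
      using summable_on_SigmaD1[where f = "\<lambda>x y. u n (x \<otimes> y) * m y", OF _ x] J'
      by (auto simp: has_sum_iff)
    then show "((\<lambda>y. u n (x \<otimes> y) * m y) has_sum u (Suc n) x) (carrier G)"
      using conv_Suc[OF x, of n] by (simp add: has_sum_iff)
  qed
  have "(u (Suc n) has_sum 1) (carrier G)"
  proof (rule has_sum_SigmaD[OF J'])
    fix x assume "x \<in> carrier G"
    then show "((\<lambda>y. case (x, y) of (x, y) \<Rightarrow> u n (x \<otimes> y) * m y) has_sum u (Suc n) x) (carrier G)"
      using rows by simp
  qed
  moreover have "\<forall>x\<in>carrier G. 0 \<le> u (Suc n) x"
    using conv_Suc by (auto intro!: infsum_nonneg mult_nonneg_nonneg m_nn nn)
  ultimately show ?case by blast
qed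

lemma u_nonneg: "x \<in> carrier G \<Longrightarrow> 0 \<le> u n x"
  using u_props by blast

lemma u_has_sum: "(u n has_sum 1) (carrier G)"
  using u_props by blast

lemma u_le1:
  assumes x: "x \<in> carrier G"
  shows "u n x \<le> 1"
proof -
  have "sum (u n) {x} \<le> 1"
    by (rule finite_sum_le_has_sum[OF u_has_sum]) (use x u_nonneg in auto)
  then show ?thesis by simp
qed

lemma u_L2: "u n \<in> L2 G"
proof -
  have "(\<lambda>x. (u n x)\<^sup>2) summable_on carrier G"
  proof (rule summable_on_comparison_test[where f = "u n"])
    show "u n summable_on carrier G" using u_has_sum by (auto simp: has_sum_iff)
  next
    fix x assume x: "x \<in> carrier G"
    show "(u n x)\<^sup>2 \<le> u n x"
      using u_nonneg[OF x] u_le1[OF x] unfolding power2_eq_square by (rule mult_left_le[rotated])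
  qed simp
  then show ?thesis by (simp add: L2_def)
qed

lemma ip_u_Suc:
  assumes "g \<in> L2 G"
  shows "ip G (u (Suc i)) g = BB (u i) g"
proof -
  have "ip G (u (Suc i)) g = (\<Sum>\<^sub>\<infinity>x\<in>carrier G. (\<Sum>\<^sub>\<infinity>y\<in>carrier G. u i (x \<otimes> y) * m y) * g x)"
    unfolding ip_def by (rule infsum_cong) (metis conv_Suc)
  also have "\<dots> = BB (u i) g" by (rule ip_conv[OF u_L2 assms])
  finally show ?thesis .
qed

lemma ip_u_shift: "ip G (u (Suc i)) (u j) = ip G (u i) (u (Suc j))"
  using ip_u_Suc[OF u_L2, of i j] ip_u_Suc[OF u_L2, of j i] BB_sym[OF u_L2 u_L2, of i j]
  by (simp add: ip_sym)

lemma ip_u: "ip G (u i) (u j) = u (i + j) \<one>"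
proof -
  have "ip G (u i) (u j) = ip G (u 0) (u (i + j))"
  proof (induction i arbitrary: j)
    case (Suc i)
    then show ?case using ip_u_shift[of i j] Suc[of "Suc j"] by simp
  qed simp
  also have "\<dots> = u (i + j) \<one>"
    unfolding ip_def by (simp add: delta_infsum)
  finally show ?thesis .
qed

lemma BB_u: "BB (u i) (u j) = u (Suc (i + j)) \<one>"
  using ip_u_Suc[OF u_L2, of i j] ip_u[of "Suc i" j] by simp


lemma u_one_nonneg: "0 \<le> u k \<one>"
  using u_nonneg[of \<one> k] by simp

lemma decay_step:
  shows "dirichlet G m (\<lambda>x. u n x + u (Suc n) x) \<le> 2 * (u (n+n) \<one> - u (Suc (Suc (n+n))) \<one>)"
    and "u (n+n) \<one> \<le> norm2sq G (\<lambda>x. u n x + u (Suc n) x)"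
proof -
  have La: "u n \<in> L2 G" and Lb: "u (Suc n) \<in> L2 G" by (rule u_L2)+
  have Lnb: "(\<lambda>x. (-1) * u (Suc n) x) \<in> L2 G" by (rule L2_cmult[OF Lb])
  have Ls: "(\<lambda>x. u n x + u (Suc n) x) \<in> L2 G" by (rule L2_add[OF La Lb])
  have Lv: "(\<lambda>x. u n x + (-1) * u (Suc n) x) \<in> L2 G" by (rule L2_add[OF La Lnb])
  have ips: "ip G (\<lambda>x. u n x + u (Suc n) x) (\<lambda>x. u n x + u (Suc n) x)
      = ip G (u n) (u n) + ip G (u n) (u (Suc n)) + (ip G (u (Suc n)) (u n) + ip G (u (Suc n)) (u (Suc n)))"
    using ip_add_left[OF La Lb Ls] ip_add_right[OF La Lb La] ip_add_right[OF La Lb Lb] by simp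
  have BBs: "BB (\<lambda>x. u n x + u (Suc n) x) (\<lambda>x. u n x + u (Suc n) x)
      = BB (u n) (u n) + BB (u n) (u (Suc n)) + (BB (u (Suc n)) (u n) + BB (u (Suc n)) (u (Suc n)))"
    using BB_add_left[OF La Lb Ls] BB_add_right[OF La Lb La] BB_add_right[OF La Lb Lb] by simp
  have v1: "ip G (\<lambda>x. u n x + (-1) * u (Suc n) x) (\<lambda>x. u n x + (-1) * u (Suc n) x)
      = ip G (u n) (\<lambda>x. u n x + (-1) * u (Suc n) x) + ip G (\<lambda>x. (-1) * u (Suc n) x) (\<lambda>x. u n x + (-1) * u (Suc n) x)"
    by (rule ip_add_left[OF La Lnb Lv])
  have v2: "ip G (u n) (\<lambda>x. u n x + (-1) * u (Suc n) x) = ip G (u n) (u n) + ip G (u n) (\<lambda>x. (-1) * u (Suc n) x)"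
    by (rule ip_add_right[OF La Lnb La])
  have v3: "ip G (\<lambda>x. (-1) * u (Suc n) x) (\<lambda>x. u n x + (-1) * u (Suc n) x) = (-1) * ip G (u (Suc n)) (\<lambda>x. u n x + (-1) * u (Suc n) x)"
    by (rule ip_cmult_left)
  have v4: "ip G (u (Suc n)) (\<lambda>x. u n x + (-1) * u (Suc n) x) = ip G (u (Suc n)) (u n) + ip G (u (Suc n)) (\<lambda>x. (-1) * u (Suc n) x)"
    by (rule ip_add_right[OF La Lnb Lb])
  have v5: "\<And>h. ip G h (\<lambda>x. (-1) * u (Suc n) x) = (-1) * ip G h (u (Suc n))"
    using ip_cmult_left[where c="-1" and f="u (Suc n)"] ip_sym by metis
  have w1: "BB (\<lambda>x. u n x + (-1) * u (Suc n) x) (\<lambda>x. u n x + (-1) * u (Suc n) x)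
      = BB (u n) (\<lambda>x. u n x + (-1) * u (Suc n) x) + BB (\<lambda>x. (-1) * u (Suc n) x) (\<lambda>x. u n x + (-1) * u (Suc n) x)"
    by (rule BB_add_left[OF La Lnb Lv])
  have w2: "BB (u n) (\<lambda>x. u n x + (-1) * u (Suc n) x) = BB (u n) (u n) + BB (u n) (\<lambda>x. (-1) * u (Suc n) x)"
    by (rule BB_add_right[OF La Lnb La])
  have w3: "BB (\<lambda>x. (-1) * u (Suc n) x) (\<lambda>x. u n x + (-1) * u (Suc n) x) = (-1) * BB (u (Suc n)) (\<lambda>x. u n x + (-1) * u (Suc n) x)"
    by (rule BB_cmult_left)
  have w4: "BB (u (Suc n)) (\<lambda>x. u n x + (-1) * u (Suc n) x) = BB (u (Suc n)) (u n) + BB (u (Suc n)) (\<lambda>x. (-1) * u (Suc n) x)"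
    by (rule BB_add_right[OF La Lnb Lb])
  have w5: "\<And>h. BB h (\<lambda>x. (-1) * u (Suc n) x) = (-1) * BB h (u (Suc n))"
    by (rule BB_cmult_right)
  have bnd: "\<bar>BB (\<lambda>x. u n x + (-1) * u (Suc n) x) (\<lambda>x. u n x + (-1) * u (Suc n) x)\<bar>
      \<le> ip G (\<lambda>x. u n x + (-1) * u (Suc n) x) (\<lambda>x. u n x + (-1) * u (Suc n) x)"
    using BB_bound[OF Lv] by (simp only: norm2sq_ip)
  then have bnd': "0 \<le> ip G (\<lambda>x. u n x + (-1) * u (Suc n) x) (\<lambda>x. u n x + (-1) * u (Suc n) x)
      + BB (\<lambda>x. u n x + (-1) * u (Suc n) x) (\<lambda>x. u n x + (-1) * u (Suc n) x)"
    by linarith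
  have dE: "dirichlet G m (\<lambda>x. u n x + u (Suc n) x) = ip G (\<lambda>x. u n x + u (Suc n) x) (\<lambda>x. u n x + u (Suc n) x)
      - BB (\<lambda>x. u n x + u (Suc n) x) (\<lambda>x. u n x + u (Suc n) x)"
    using dirichlet_eq[OF Ls] by (simp only: norm2sq_ip)
  have r: "ip G (u n) (u n) = u (n+n) \<one>" "ip G (u n) (u (Suc n)) = u (Suc (n+n)) \<one>"
    "ip G (u (Suc n)) (u n) = u (Suc (n+n)) \<one>" "ip G (u (Suc n)) (u (Suc n)) = u (Suc (Suc (n+n))) \<one>"
    "BB (u n) (u n) = u (Suc (n+n)) \<one>" "BB (u n) (u (Suc n)) = u (Suc (Suc (n+n))) \<one>"
    "BB (u (Suc n)) (u n) = u (Suc (Suc (n+n))) \<one>" "BB (u (Suc n)) (u (Suc n)) = u (Suc (Suc (Suc (n+n)))) \<one>"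
    by (simp_all only: ip_u BB_u add_Suc_right add_Suc)
  have ipv: "ip G (\<lambda>x. u n x + (-1) * u (Suc n) x) (\<lambda>x. u n x + (-1) * u (Suc n) x)
     = u (n+n) \<one> - 2 * u (Suc (n+n)) \<one> + u (Suc (Suc (n+n))) \<one>"
    using v1 v2 v3 v4 v5[of "u n"] v5[of "u (Suc n)"] r by linarith
  have BBv: "BB (\<lambda>x. u n x + (-1) * u (Suc n) x) (\<lambda>x. u n x + (-1) * u (Suc n) x)
     = u (Suc (n+n)) \<one> - 2 * u (Suc (Suc (n+n))) \<one> + u (Suc (Suc (Suc (n+n)))) \<one>"
    using w1 w2 w3 w4 w5[of "u n"] w5[of "u (Suc n)"] r by linarith
  have dd: "dirichlet G m (\<lambda>x. u n x + u (Suc n) x) = u (n+n) \<one> + u (Suc (n+n)) \<one> - u (Suc (Suc (n+n))) \<one> - u (Suc (Suc (Suc (n+n)))) \<one>"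
    using dE ips BBs r by linarith
  show "dirichlet G m (\<lambda>x. u n x + u (Suc n) x) \<le> 2 * (u (n+n) \<one> - u (Suc (Suc (n+n))) \<one>)"
  proof -
    have key: "\<And>d I Bv r0 r1 r2 r3::real. (d::real) = (r0::real) + (r1::real) - (r2::real) - r3 \<Longrightarrow> (I::real) = r0 - 2*r1 + r2 \<Longrightarrow> (Bv::real) = r1 - 2*r2 + r3 \<Longrightarrow> 0 \<le> I + Bv \<Longrightarrow> d \<le> 2*(r0 - r2)"
      by (smt (verit))
    show ?thesis by (rule key[OF dd ipv BBv bnd'])
  qed
  show "u (n+n) \<one> \<le> norm2sq G (\<lambda>x. u n x + u (Suc n) x)"
    using ips r u_one_nonneg[of "Suc (n+n)"] u_one_nonneg[of "Suc (Suc (n+n))"] unfolding norm2sq_ip by linarith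
qed

end


context pm begin

lemma trunc_pointwise: "(max (a - t) 0 - max (b - t) 0)\<^sup>2 \<le> (a - b)\<^sup>2" for a b t :: real
proof -
  have "\<bar>max (a - t) 0 - max (b - t) 0\<bar> \<le> \<bar>a - b\<bar>" by linarith
  then have "\<bar>max (a - t) 0 - max (b - t) 0\<bar>\<^sup>2 \<le> \<bar>a - b\<bar>\<^sup>2"
    by (rule power_mono) simp
  then show ?thesis by simp
qed

lemma trunc_norm_pointwise: "a\<^sup>2 - 2 * t * a \<le> (max (a - t) 0)\<^sup>2" if "0 \<le> a" "0 < t" for a t :: real
proof (cases "a \<ge> t")
  case True
  then show ?thesis by (simp add: power2_diff)
next
  case False
  then have "a * (a - 2 * t) \<le> 0" using that by (intro mult_nonneg_nonpos) auto
  then show ?thesis using False by (simp add: power2_eq_square algebra_simps)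
qed

lemma trunc:
  assumes nn: "\<And>x. x \<in> carrier G \<Longrightarrow> 0 \<le> f x" and L: "f \<in> L2 G"
    and hs: "(f has_sum M) (carrier G)" and t: "t > 0"
  shows "(\<lambda>x. max (f x - t) 0) \<in> L2 G"
    and "dirichlet G m (\<lambda>x. max (f x - t) 0) \<le> dirichlet G m f"
    and "norm2sq G f - 2 * t * M \<le> norm2sq G (\<lambda>x. max (f x - t) 0)"
    and "finite (supp_G G (\<lambda>x. max (f x - t) 0))"
    and "real (card (supp_G G (\<lambda>x. max (f x - t) 0))) \<le> M / t"
proof -
  show Lg: "(\<lambda>x. max (f x - t) 0) \<in> L2 G"
    unfolding L2_def mem_Collect_eq
  proof (rule summable_on_comparison_test[where f = "\<lambda>x. (f x)\<^sup>2"], goal_cases)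
    case 1 then show ?case using L by (simp add: L2_def)
  next
    case (2 x)
    then show ?case using nn[OF 2] t by (intro power_mono) auto
  qed simp
  show "dirichlet G m (\<lambda>x. max (f x - t) 0) \<le> dirichlet G m f"
    unfolding dirichlet_def
  proof (intro divide_right_mono infsum_mono)
    show "(\<lambda>(x,y). ((max (f (x \<otimes> y) - t) 0) - max (f x - t) 0)\<^sup>2 * m y) summable_on (carrier G \<times> carrier G)"
      using dirichlet_summable[OF Lg] by simp
    show "(\<lambda>(x,y). (f (x \<otimes> y) - f x)\<^sup>2 * m y) summable_on (carrier G \<times> carrier G)"
      using dirichlet_summable[OF L] by simp
  next
    fix p assume "p \<in> carrier G \<times> carrier G"
    then obtain x y where p: "p = (x,y)" "x \<in> carrier G" "y \<in> carrier G" by auto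
    have "((max (f (x \<otimes> y) - t) 0) - max (f x - t) 0)\<^sup>2 * m y \<le> (f (x \<otimes> y) - f x)\<^sup>2 * m y"
      by (rule mult_right_mono[OF trunc_pointwise m_nn[OF p(3)]])
    then show "(case p of (x,y) \<Rightarrow> ((max (f (x \<otimes> y) - t) 0) - max (f x - t) 0)\<^sup>2 * m y) \<le> (case p of (x,y) \<Rightarrow> (f (x \<otimes> y) - f x)\<^sup>2 * m y)"
      using p by simp
  qed simp
  show "norm2sq G f - 2 * t * M \<le> norm2sq G (\<lambda>x. max (f x - t) 0)"
  proof -
    have A: "((\<lambda>x. (f x)\<^sup>2 + (- 2 * t) * f x) has_sum (norm2sq G f + (- 2 * t) * M)) (carrier G)"
      by (intro has_sum_add has_sum_cmult_right hs) (use L in \<open>simp add: L2_def norm2sq_def\<close>)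
    have B: "((\<lambda>x. (max (f x - t) 0)\<^sup>2) has_sum norm2sq G (\<lambda>x. max (f x - t) 0)) (carrier G)"
      using Lg by (simp add: L2_def norm2sq_def)
    have "norm2sq G f + (- 2 * t) * M \<le> norm2sq G (\<lambda>x. max (f x - t) 0)"
      by (rule has_sum_mono[OF A B]) (use trunc_norm_pointwise nn t in auto)
    then show ?thesis by simp
  qed
  have S: "supp_G G (\<lambda>x. max (f x - t) 0) = {x \<in> carrier G. f x > t}"
    unfolding supp_G_def by auto
  have bd: "card F \<le> nat \<lfloor>M / t\<rfloor>" if F: "F \<subseteq> {x \<in> carrier G. f x > t}" "finite F" for F
  proof -
    have "sum f F \<le> M"
      by (rule finite_sum_le_has_sum[OF hs F(2)]) (use F nn in auto)
    moreover have "real (card F) * t \<le> sum f F"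
    proof -
      have "\<And>i. i \<in> F \<Longrightarrow> t \<le> f i" using F by (auto simp: less_imp_le)
      then show ?thesis using sum_mono[of F "\<lambda>_. t" f] by simp
    qed
    ultimately have "real (card F) \<le> M / t" using t by (simp add: pos_le_divide_eq)
    then show ?thesis by linarith
  qed
  from finite_if_finite_subsets_card_bdd[OF bd]
  have fin: "finite {x \<in> carrier G. f x > t}" and cd: "card {x \<in> carrier G. f x > t} \<le> nat \<lfloor>M / t\<rfloor>"
    by blast+
  show "finite (supp_G G (\<lambda>x. max (f x - t) 0))" using S fin by simp
  show "real (card (supp_G G (\<lambda>x. max (f x - t) 0))) \<le> M / t"
  proof -
    have "0 \<le> M" using has_sum_nonneg[OF hs] nn by auto
    then have "0 \<le> M / t" using t by simp
    then have "real (nat \<lfloor>M / t\<rfloor>) \<le> M / t" by linarith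
    moreover have "real (card (supp_G G (\<lambda>x. max (f x - t) 0))) \<le> real (nat \<lfloor>M / t\<rfloor>)"
      using S cd by simp
    ultimately show ?thesis by linarith
  qed
qed

end


lemma sq_split: "(a + b)\<^sup>2 \<le> (1 + e) * a\<^sup>2 + (1 + 1/e) * b\<^sup>2" if e: "e > 0" for a b e :: real
proof -
  have "(1 + e) * a\<^sup>2 + (1 + 1/e) * b\<^sup>2 - (a + b)\<^sup>2 = (e * a - b)\<^sup>2 / e"
    using e by (simp add: field_simps power2_eq_square)
  moreover have "(e * a - b)\<^sup>2 / e \<ge> 0" using e by simp
  ultimately show ?thesis by linarith
qed

context pm begin

lemma norm_split:
  assumes a: "a \<in> L2 G" and b: "b \<in> L2 G" and e: "e > 0"
  shows "norm2sq G (\<lambda>x. a x + b x) \<le> (1 + e) * norm2sq G a + (1 + 1/e) * norm2sq G b"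
proof -
  have A: "((\<lambda>x. (a x)\<^sup>2) has_sum norm2sq G a) (carrier G)"
    using a by (simp add: L2_def norm2sq_def)
  have B: "((\<lambda>x. (b x)\<^sup>2) has_sum norm2sq G b) (carrier G)"
    using b by (simp add: L2_def norm2sq_def)
  have AB: "((\<lambda>x. (a x + b x)\<^sup>2) has_sum norm2sq G (\<lambda>x. a x + b x)) (carrier G)"
    using L2_add[OF a b] by (simp add: L2_def norm2sq_def)
  have R: "((\<lambda>x. (1 + e) * (a x)\<^sup>2 + (1 + 1/e) * (b x)\<^sup>2) has_sum ((1 + e) * norm2sq G a + (1 + 1/e) * norm2sq G b)) (carrier G)"
    by (intro has_sum_add has_sum_cmult_right A B)
  show ?thesis
    by (rule has_sum_mono[OF AB R]) (rule sq_split[OF e])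
qed

definition dev :: "('a \<Rightarrow> real) \<Rightarrow> 'a \<Rightarrow> real" where
  "dev g h = (\<Sum>\<^sub>\<infinity>x\<in>carrier G. (g (x \<otimes> h) - g x)\<^sup>2)"

lemma dev_norm: "dev g h = norm2sq G (\<lambda>x. g (x \<otimes> h) - g x)"
  by (simp add: dev_def norm2sq_def)

lemma prod_bound:
  assumes g: "g \<in> L2 G"
    and U: "\<And>h. h \<in> U \<Longrightarrow> h \<in> carrier G \<and> dev g h \<le> D"
    and hs: "set hs \<subseteq> U"
  shows "foldr (\<lambda>g h. g \<otimes> h) hs \<one> \<in> carrier G \<and> dev g (foldr (\<lambda>g h. g \<otimes> h) hs \<one>) \<le> (real (length hs))\<^sup>2 * D"
  using hs
proof (induction hs)
  case Nil
  have "dev g \<one> = 0" unfolding dev_def by (rule infsum_0) simp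
  then show ?case by simp
next
  case (Cons h hs)
  define q where "q = foldr (\<lambda>g h. g \<otimes> h) hs \<one>"
  have h: "h \<in> carrier G" "dev g h \<le> D" using U Cons.prems by auto
  have q: "q \<in> carrier G" "dev g q \<le> (real (length hs))\<^sup>2 * D"
    using Cons.IH Cons.prems unfolding q_def by auto
  have La: "(\<lambda>x. g (x \<otimes> h \<otimes> q) - g (x \<otimes> h)) \<in> L2 G"
  proof -
    have "(\<lambda>x. g (x \<otimes> q) - g x) \<in> L2 G" by (intro L2_diff L2_transl q g)
    from L2_transl[OF h(1) this] show ?thesis .
  qed
  have Lb: "(\<lambda>x. g (x \<otimes> h) - g x) \<in> L2 G" by (intro L2_diff L2_transl h g)
  have na: "norm2sq G (\<lambda>x. g (x \<otimes> h \<otimes> q) - g (x \<otimes> h)) = dev g q"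
    unfolding dev_norm using norm_transl[OF h(1), of "\<lambda>x. g (x \<otimes> q) - g x"] by simp
  have nb: "norm2sq G (\<lambda>x. g (x \<otimes> h) - g x) = dev g h" by (simp add: dev_norm)
  have eq: "dev g (h \<otimes> q) = norm2sq G (\<lambda>x. (g (x \<otimes> h \<otimes> q) - g (x \<otimes> h)) + (g (x \<otimes> h) - g x))"
    unfolding dev_def norm2sq_def
    by (rule infsum_cong) (use h q in \<open>simp add: m_assoc\<close>)
  have fq: "foldr (\<lambda>g h. g \<otimes> h) (h # hs) \<one> = h \<otimes> q" by (simp add: q_def)
  show ?case
  proof (cases "hs = []")
    case True
    then have "dev g (h \<otimes> q) = dev g h" using h by (simp add: q_def)
    then show ?thesis using fq h True by simp
  next
    case False
    define n where "n = real (length hs)"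
    have n: "n \<ge> 1" using False by (simp add: n_def Suc_le_eq)
    have "dev g (h \<otimes> q) \<le> (1 + 1/n) * dev g q + (1 + 1/(1/n)) * dev g h"
      using norm_split[OF La Lb, of "1/n"] n eq na nb by simp
    also have "\<dots> \<le> (1 + 1/n) * (n\<^sup>2 * D) + (1 + n) * D"
      using q(2) h(2) n by (intro add_mono mult_left_mono) (auto simp: n_def)
    also have "\<dots> = (n + 1)\<^sup>2 * D"
      using n by (simp add: field_simps power2_eq_square)
    finally show ?thesis using fq h q by (simp add: n_def add.commute)
  qed
qed

lemma dev_eq:
  assumes g: "g \<in> L2 G" and t: "t \<in> carrier G"
  shows "dev g t = 2 * norm2sq G g - 2 * ip G (\<lambda>x. g (x \<otimes> t)) g"
proof -
  have Lt: "(\<lambda>x. g (x \<otimes> t)) \<in> L2 G" by (rule L2_transl[OF t g])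
  have A: "((\<lambda>x. (g (x \<otimes> t))\<^sup>2) has_sum norm2sq G g) (carrier G)"
    using Lt norm_transl[OF t, of g] by (simp add: L2_def norm2sq_def has_sum_iff)
  have B: "((\<lambda>x. (g x)\<^sup>2) has_sum norm2sq G g) (carrier G)"
    using g by (simp add: L2_def norm2sq_def)
  have C: "((\<lambda>x. g (x \<otimes> t) * g x) has_sum ip G (\<lambda>x. g (x \<otimes> t)) g) (carrier G)"
    using L2_mult[OF Lt g] by (simp add: ip_def has_sum_iff)
  have "((\<lambda>x. (g (x \<otimes> t))\<^sup>2 + (g x)\<^sup>2 + (-2) * (g (x \<otimes> t) * g x)) has_sum (norm2sq G g + norm2sq G g + (-2) * ip G (\<lambda>x. g (x \<otimes> t)) g)) (carrier G)"
    by (intro has_sum_add has_sum_cmult_right A B C)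
  then have "((\<lambda>x. (g (x \<otimes> t) - g x)\<^sup>2) has_sum (2 * norm2sq G g - 2 * ip G (\<lambda>x. g (x \<otimes> t)) g)) (carrier G)"
    by (simp add: power2_diff algebra_simps)
  then show ?thesis by (simp add: dev_def has_sum_iff)
qed

lemma avg_bound:
  assumes fin: "finite (supp_G G g)" and S: "finite S" "S \<subseteq> carrier G"
  shows "(\<Sum>t\<in>S. ip G (\<lambda>x. g (x \<otimes> t)) g) \<le> real (card (supp_G G g)) * norm2sq G g"
proof -
  define A where "A = supp_G G g"
  have AX: "A \<subseteq> carrier G" by (auto simp: A_def supp_G_def)
  have z: "\<And>x. x \<in> carrier G \<Longrightarrow> x \<notin> A \<Longrightarrow> g x = 0" by (auto simp: A_def supp_G_def)
  have finA: "finite A" using fin by (simp add: A_def)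
  have ipA: "ip G (\<lambda>x. g (x \<otimes> t)) g = (\<Sum>x\<in>A. g (x \<otimes> t) * g x)" for t
  proof -
    have "ip G (\<lambda>x. g (x \<otimes> t)) g = (\<Sum>\<^sub>\<infinity>x\<in>A. g (x \<otimes> t) * g x)"
      unfolding ip_def by (rule infsum_cong_neutral) (use AX z in auto)
    then show ?thesis using finA by simp
  qed
  have nA: "norm2sq G g = (\<Sum>x\<in>A. (g x)\<^sup>2)"
  proof -
    have "norm2sq G g = (\<Sum>\<^sub>\<infinity>x\<in>A. (g x)\<^sup>2)"
      unfolding norm2sq_def by (rule infsum_cong_neutral) (use AX z in auto)
    then show ?thesis using finA by simp
  qed
  have inner: "(\<Sum>t\<in>S. \<bar>g (x \<otimes> t)\<bar>) \<le> (\<Sum>y\<in>A. \<bar>g y\<bar>)" if x: "x \<in> carrier G" for x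
  proof -
    have inj: "inj_on (\<lambda>t. x \<otimes> t) S"
      unfolding inj_on_def using S(2) x Units_l_cancel Units_eq by blast
    have "(\<Sum>t\<in>S. \<bar>g (x \<otimes> t)\<bar>) = (\<Sum>y\<in>(\<lambda>t. x \<otimes> t) ` S. \<bar>g y\<bar>)"
      using sum.reindex[OF inj, of "\<lambda>y. \<bar>g y\<bar>"] by simp
    also have "\<dots> \<le> (\<Sum>y\<in>(\<lambda>t. x \<otimes> t) ` S \<union> A. \<bar>g y\<bar>)"
      by (rule sum_mono2) (use S finA in auto)
    also have "\<dots> = (\<Sum>y\<in>A. \<bar>g y\<bar>)"
      by (rule sum.mono_neutral_right) (use S finA x z in auto)
    finally show ?thesis .
  qed
  have "(\<Sum>t\<in>S. ip G (\<lambda>x. g (x \<otimes> t)) g) = (\<Sum>t\<in>S. \<Sum>x\<in>A. g (x \<otimes> t) * g x)"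
    by (simp add: ipA)
  also have "\<dots> = (\<Sum>x\<in>A. g x * (\<Sum>t\<in>S. g (x \<otimes> t)))"
    by (subst sum.swap) (simp add: sum_distrib_left mult.commute)
  also have "\<dots> \<le> (\<Sum>x\<in>A. \<bar>g x\<bar> * (\<Sum>y\<in>A. \<bar>g y\<bar>))"
  proof (rule sum_mono)
    fix x assume x: "x \<in> A"
    have "g x * (\<Sum>t\<in>S. g (x \<otimes> t)) \<le> \<bar>g x\<bar> * \<bar>\<Sum>t\<in>S. g (x \<otimes> t)\<bar>"
      by (metis abs_ge_self abs_mult)
    also have "\<dots> \<le> \<bar>g x\<bar> * (\<Sum>t\<in>S. \<bar>g (x \<otimes> t)\<bar>)"
      by (intro mult_left_mono sum_abs) simp
    also have "\<dots> \<le> \<bar>g x\<bar> * (\<Sum>y\<in>A. \<bar>g y\<bar>)"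
      by (intro mult_left_mono inner) (use x AX in auto)
    finally show "g x * (\<Sum>t\<in>S. g (x \<otimes> t)) \<le> \<bar>g x\<bar> * (\<Sum>y\<in>A. \<bar>g y\<bar>)" .
  qed
  also have "\<dots> = (\<Sum>y\<in>A. \<bar>g y\<bar>)\<^sup>2"
    by (simp add: sum_distrib_right power2_eq_square)
  also have "\<dots> \<le> (\<Sum>y\<in>A. \<bar>g y\<bar>\<^sup>2) * card A"
    by (rule sum_squared_le_sum_of_squares)
  also have "\<dots> = real (card A) * norm2sq G g"
    by (simp add: nA)
  finally show ?thesis by (simp add: A_def)
qed

end


lemma infsum_sum_atMost:
  fixes h :: "nat \<Rightarrow> 'x \<Rightarrow> real"
  assumes "\<And>i. i \<le> n \<Longrightarrow> h i summable_on A"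
  shows "(\<Sum>\<^sub>\<infinity>p\<in>A. \<Sum>i\<le>n. h i p) = (\<Sum>i\<le>n. infsum (h i) A)"
    and "(\<lambda>p. \<Sum>i\<le>n. h i p) summable_on A"
  using assms
proof (induction n)
  case 0
  { case 1 then show ?case by simp }
  { case 2 then show ?case by simp }
next
  case (Suc n)
  { case 1
    have "(\<Sum>\<^sub>\<infinity>p\<in>A. \<Sum>i\<le>Suc n. h i p) = (\<Sum>\<^sub>\<infinity>p\<in>A. (\<Sum>i\<le>n. h i p) + h (Suc n) p)"
      by simp
    also have "\<dots> = (\<Sum>\<^sub>\<infinity>p\<in>A. \<Sum>i\<le>n. h i p) + infsum (h (Suc n)) A"
      by (rule infsum_add) (use Suc.IH(2) 1 in auto)
    finally show ?case using Suc.IH(1) 1 by simp }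
  { case 2
    have "(\<lambda>p. (\<Sum>i\<le>n. h i p) + h (Suc n) p) summable_on A"
      by (rule summable_on_add) (use Suc.IH(2) 2 in auto)
    then show ?case by simp }
qed

lemma has_sum_sum_atMost:
  fixes h :: "nat \<Rightarrow> 'x \<Rightarrow> real"
  assumes "\<And>i. i \<le> n \<Longrightarrow> (h i has_sum s i) A"
  shows "((\<lambda>p. \<Sum>i\<le>n. h i p) has_sum (\<Sum>i\<le>n. s i)) A"
  using assms
proof (induction n)
  case (Suc n)
  have "((\<lambda>p. (\<Sum>i\<le>n. h i p) + h (Suc n) p) has_sum ((\<Sum>i\<le>n. s i) + s (Suc n))) A"
    by (rule has_sum_add) (use Suc in auto)
  then show ?case by simp
qed simp

locale mainctx = group G for G :: "('a, 'b) monoid_scheme" (structure) +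
  fixes k :: nat
    and mus :: "nat \<Rightarrow> 'a \<Rightarrow> real"
    and C :: real
    and K :: "nat \<Rightarrow> real \<Rightarrow> 'a set"
    and Q :: nat
    and F Finv :: "real \<Rightarrow> real"
    and \<gamma> :: real
  assumes prob: "\<And>i. i \<le> k \<Longrightarrow> prob_meas G (mus i)"
    and symm: "\<And>i. i \<le> k \<Longrightarrow> sym_meas G (mus i)"
    and Cpos: "C > 0"
    and Ksub: "\<And>i R. i \<le> k \<Longrightarrow> R > 0 \<Longrightarrow> K i R \<subseteq> carrier G"
    and Kineq: "\<And>i R f h. i \<le> k \<Longrightarrow> R > 0 \<Longrightarrow> f \<in> L2 G \<Longrightarrow> h \<in> K i R \<Longrightarrow>
         (\<Sum>\<^sub>\<infinity>x\<in>carrier G. (f (x \<otimes> h) - f x)\<^sup>2) \<le> C * R * dirichlet G (mus i) f"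
    and Qpos: "Q \<ge> 1"
    and Fpos: "\<And>t. t > 0 \<Longrightarrow> F t > 0"
    and Fmono: "strict_mono_on {0<..} F"
    and Fbij: "bij_betw F {0<..} {0<..}"
    and Finv: "\<And>s. s > 0 \<Longrightarrow> Finv s = inv_into {0<..} F s"
    and gpos: "\<gamma> > 0"
    and Freg: "regularly_varying F \<gamma>"
    and growth: "\<And>R. R \<ge> 1 \<Longrightarrow>
         infinite (set_power G (\<Union>i\<le>k. K i R) Q) \<or>
         real (card (set_power G (\<Union>i\<le>k. K i R) Q)) \<ge> F R"
begin

definition mu :: "'a \<Rightarrow> real" where "mu = (\<lambda>x. (\<Sum>i\<le>k. mus i x) / real (k + 1))"

lemma pm_i: "i \<le> k \<Longrightarrow> pm G (mus i)"
  using prob[of i] unfolding prob_meas_def pm_def pm_axioms_def using group_axioms by auto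

lemma spm_mu: "spm G mu"
proof -
  have nn: "\<And>x. x \<in> carrier G \<Longrightarrow> 0 \<le> mu x"
    using prob unfolding mu_def prob_meas_def by (auto intro!: sum_nonneg divide_nonneg_nonneg)
  have "((\<lambda>x. \<Sum>i\<le>k. mus i x) has_sum (\<Sum>i\<le>k. 1)) (carrier G)"
    by (rule has_sum_sum_atMost) (use prob in \<open>auto simp: prob_meas_def\<close>)
  from has_sum_cmult_left[OF this, of "1 / real (k+1)"]
  have hs: "(mu has_sum 1) (carrier G)" by (simp add: mu_def)
  have sy: "\<And>x. x \<in> carrier G \<Longrightarrow> mu (inv x) = mu x"
    using symm unfolding mu_def sym_meas_def by simp
  show ?thesis unfolding spm_def spm_axioms_def pm_def pm_axioms_def
    using nn hs sy group_axioms by auto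
qed

lemma dirichlet_mu:
  assumes f: "f \<in> L2 G"
  shows "dirichlet G mu f = (\<Sum>i\<le>k. dirichlet G (mus i) f) / real (k + 1)"
proof -
  have S: "\<And>i. i \<le> k \<Longrightarrow> (\<lambda>(x,y). (f (x \<otimes> y) - f x)\<^sup>2 * mus i y) summable_on (carrier G \<times> carrier G)"
    using pm.dirichlet_summable[OF pm_i f] by blast
  have "dirichlet G mu f = (\<Sum>\<^sub>\<infinity>p\<in>carrier G \<times> carrier G. \<Sum>i\<le>k. (\<lambda>(x,y). (f (x \<otimes> y) - f x)\<^sup>2 * mus i y) p) / real (k+1) / 2"
  proof -
    have "(\<Sum>\<^sub>\<infinity>(x,y)\<in>carrier G \<times> carrier G. (f (x \<otimes> y) - f x)\<^sup>2 * mu y)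
        = (\<Sum>\<^sub>\<infinity>p\<in>carrier G \<times> carrier G. (\<Sum>i\<le>k. (\<lambda>(x,y). (f (x \<otimes> y) - f x)\<^sup>2 * mus i y) p) * (1 / real (k+1)))"
      by (rule infsum_cong) (auto simp: mu_def sum_distrib_left sum_distrib_right)
    also have "\<dots> = (\<Sum>\<^sub>\<infinity>p\<in>carrier G \<times> carrier G. \<Sum>i\<le>k. (\<lambda>(x,y). (f (x \<otimes> y) - f x)\<^sup>2 * mus i y) p) * (1 / real (k+1))"
      by (rule infsum_cmult_left')
    finally show ?thesis unfolding dirichlet_def by simp
  qed
  also have "\<dots> = (\<Sum>i\<le>k. (\<Sum>\<^sub>\<infinity>p\<in>carrier G \<times> carrier G. (\<lambda>(x,y). (f (x \<otimes> y) - f x)\<^sup>2 * mus i y) p)) / real (k+1) / 2"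
    using infsum_sum_atMost(1)[of k "\<lambda>i. \<lambda>(x,y). (f (x \<otimes> y) - f x)\<^sup>2 * mus i y", OF S] by simp
  also have "\<dots> = (\<Sum>i\<le>k. dirichlet G (mus i) f) / real (k + 1)"
    by (simp add: dirichlet_def sum_divide_distrib[symmetric] case_prod_unfold)
  finally show ?thesis .
qed

lemma dirichlet_i_le:
  assumes f: "f \<in> L2 G" and i: "i \<le> k"
  shows "dirichlet G (mus i) f \<le> real (k + 1) * dirichlet G mu f"
proof -
  have "dirichlet G (mus i) f \<le> (\<Sum>j\<le>k. dirichlet G (mus j) f)"
    by (rule member_le_sum) (use i pm.dirichlet_nonneg[OF pm_i] in auto)
  then show ?thesis using dirichlet_mu[OF f] by simp
qed

lemma F_less: "0 < s \<Longrightarrow> s < t \<Longrightarrow> F s < F t"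
  using strict_mono_onD[OF Fmono, of s t] by auto

lemma F_mono: "0 < s \<Longrightarrow> s \<le> t \<Longrightarrow> F s \<le> F t"
  using F_less[of s t] by (cases "s = t") auto

lemma Finv_pos: "s > 0 \<Longrightarrow> Finv s > 0"
  using Finv bij_betw_inv_into[OF Fbij] by (auto simp: bij_betw_def)

lemma F_Finv: "s > 0 \<Longrightarrow> F (Finv s) = s"
  using Finv bij_betw_inv_into_right[OF Fbij] by auto

lemma Finv_F: "t > 0 \<Longrightarrow> Finv (F t) = t"
  using Finv[of "F t"] Fpos[of t] bij_betw_inv_into_left[OF Fbij] by auto

lemma Finv_mono: "0 < s \<Longrightarrow> s \<le> t \<Longrightarrow> Finv s \<le> Finv t"
proof (rule ccontr)
  assume a: "0 < s" "s \<le> t" "\<not> Finv s \<le> Finv t"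
  then have "F (Finv t) < F (Finv s)" using F_less[of "Finv t" "Finv s"] Finv_pos[of t] by auto
  then show False using a F_Finv[of s] F_Finv[of t] by auto
qed

end


context mainctx begin

lemma core:
  assumes fin: "finite (supp_G G g)" and V: "V \<ge> 1" and cardV: "real (card (supp_G G g)) \<le> V"
  shows "norm2sq G g \<le> (real Q)\<^sup>2 * C * real (k+1) * max 1 (Finv (2*V)) * dirichlet G mu g"
proof -
  interpret mp: spm G mu by (rule spm_mu)
  have gL: "g \<in> L2 G" by (rule L2_finite) (use fin in \<open>simp add: supp_G_def\<close>)
  define R where "R = max 1 (Finv (2*V))"
  have R1: "R \<ge> 1" by (simp add: R_def)
  have FR: "F R \<ge> 2 * V"
  proof (cases "Finv (2*V) \<ge> 1")
    case True
    then show ?thesis using F_Finv[of "2*V"] V by (simp add: R_def)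
  next
    case False
    then have "R = 1" by (simp add: R_def)
    moreover have "F (Finv (2*V)) < F 1"
      using F_less[of "Finv (2*V)" 1] Finv_pos[of "2*V"] V False by auto
    ultimately show ?thesis using F_Finv[of "2*V"] V by simp
  qed
  define U where "U = (\<Union>i\<le>k. K i R)"
  define D where "D = C * R * real (k+1) * dirichlet G mu g"
  have hU: "h \<in> carrier G \<and> mp.dev g h \<le> D" if h: "h \<in> U" for h
  proof -
    obtain i where i: "i \<le> k" "h \<in> K i R" using h by (auto simp: U_def)
    have hX: "h \<in> carrier G" using Ksub[of i R] i R1 by auto
    have "mp.dev g h \<le> C * R * dirichlet G (mus i) g"
      using Kineq[OF i(1) _ gL i(2)] R1 by (simp add: mp.dev_def)
    also have "\<dots> \<le> C * R * (real (k + 1) * dirichlet G mu g)"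
      using dirichlet_i_le[OF gL i(1)] Cpos R1 by (intro mult_left_mono) auto
    finally show ?thesis using hX by (simp add: D_def mult.assoc)
  qed
  define T where "T = set_power G U Q"
  have hT: "t \<in> carrier G \<and> mp.dev g t \<le> (real Q)\<^sup>2 * D" if t: "t \<in> T" for t
  proof -
    obtain gs where gs: "t = foldr (\<lambda>g h. g \<otimes> h) gs \<one>" "length gs = Q" "set gs \<subseteq> U"
      using t by (auto simp: T_def set_power_def)
    show ?thesis using mp.prod_bound[OF gL hU gs(3)] gs by simp
  qed
  obtain S where S: "finite S" "S \<subseteq> T" "real (card S) \<ge> 2 * V"
  proof (cases "finite T")
    case True
    then have "real (card T) \<ge> F R" using growth[OF R1] by (simp add: T_def U_def)
    then show ?thesis using that[of T] True FR by simp
  next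
    case False
    obtain B where "finite B" "card B = nat \<lceil>2 * V\<rceil>" "B \<subseteq> T"
      using infinite_arbitrarily_large[OF False] by blast
    then show ?thesis using that[of B] by linarith
  qed
  have SX: "S \<subseteq> carrier G" using S(2) hT by auto
  have nn: "norm2sq G g \<ge> 0" by (simp add: norm2sq_def infsum_nonneg)
  have "(\<Sum>t\<in>S. mp.dev g t) \<le> (\<Sum>t\<in>S. (real Q)\<^sup>2 * D)"
    by (rule sum_mono) (use S(2) hT in auto)
  also have "\<dots> = real (card S) * ((real Q)\<^sup>2 * D)" by simp
  finally have up: "(\<Sum>t\<in>S. mp.dev g t) \<le> real (card S) * ((real Q)\<^sup>2 * D)" .
  have "(\<Sum>t\<in>S. mp.dev g t) = (\<Sum>t\<in>S. 2 * norm2sq G g - 2 * ip G (\<lambda>x. g (x \<otimes> t)) g)"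
    by (rule sum.cong) (use SX mp.dev_eq[OF gL] in auto)
  also have "\<dots> = 2 * real (card S) * norm2sq G g - 2 * (\<Sum>t\<in>S. ip G (\<lambda>x. g (x \<otimes> t)) g)"
    by (simp add: sum_subtractf sum_distrib_left)
  finally have eq: "(\<Sum>t\<in>S. mp.dev g t) = 2 * real (card S) * norm2sq G g - 2 * (\<Sum>t\<in>S. ip G (\<lambda>x. g (x \<otimes> t)) g)" .
  have av: "(\<Sum>t\<in>S. ip G (\<lambda>x. g (x \<otimes> t)) g) \<le> V * norm2sq G g"
    using mp.avg_bound[OF fin S(1) SX] cardV nn
    by (meson mult_right_mono order_trans)
  have "real (card S) * norm2sq G g \<le> real (card S) * ((real Q)\<^sup>2 * D)"
  proof -
    have "real (card S) * norm2sq G g \<le> 2 * real (card S) * norm2sq G g - 2 * (V * norm2sq G g)"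
      using S(3) nn mult_right_mono[OF S(3) nn] by (simp add: algebra_simps)
    then show ?thesis using up eq av by linarith
  qed
  then have "norm2sq G g \<le> (real Q)\<^sup>2 * D"
    using S(3) V by (subst (asm) mult_le_cancel_left_pos) auto
  then show ?thesis by (simp add: D_def R_def algebra_simps)
qed

end


lemma norm2sq_pos:
  assumes "f \<in> L2 G" "x \<in> carrier G" "f x \<noteq> 0"
  shows "norm2sq G f > 0"
proof -
  have "sum (\<lambda>x. (f x)\<^sup>2) {x} \<le> norm2sq G f"
    unfolding norm2sq_def by (rule finite_sum_le_infsum) (use assms in \<open>auto simp: L2_def\<close>)
  then have "(f x)\<^sup>2 \<le> norm2sq G f" by simp
  moreover have "(f x)\<^sup>2 > 0" using assms by simp
  ultimately show ?thesis by (meson less_le_trans)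
qed

context mainctx begin

lemma Acoef_pos: "(real Q)\<^sup>2 * C * real (k+1) > 0"
  using Qpos Cpos by simp

lemma profile_lower:
  assumes V: "V \<ge> 1"
  shows "1 / ((real Q)\<^sup>2 * C * real (k+1) * max 1 (Finv (2*V))) \<le> spectral_profile G mu V"
  unfolding spectral_profile_def
proof (rule cInf_greatest)
  define d where "d = (\<lambda>x. if x = \<one> then (1::real) else 0)"
  have sd: "supp_G G d = {\<one>}" by (auto simp: supp_G_def d_def)
  have "dirichlet G mu d / norm2sq G d \<in> {dirichlet G mu f / norm2sq G f |f. finite (supp_G G f) \<and> 1 \<le> card (supp_G G f) \<and> real (card (supp_G G f)) \<le> V}"
    unfolding mem_Collect_eq by (rule exI[of _ d]) (simp add: sd V)
  then show "{dirichlet G mu f / norm2sq G f |f. finite (supp_G G f) \<and> 1 \<le> card (supp_G G f) \<and> real (card (supp_G G f)) \<le> V} \<noteq> {}"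
    by blast
next
  fix r assume "r \<in> {dirichlet G mu f / norm2sq G f |f. finite (supp_G G f) \<and> 1 \<le> card (supp_G G f) \<and> real (card (supp_G G f)) \<le> V}"
  then obtain f where r: "r = dirichlet G mu f / norm2sq G f" and f: "finite (supp_G G f)" "1 \<le> card (supp_G G f)"
    "real (card (supp_G G f)) \<le> V" by blast
  have fL: "f \<in> L2 G" by (rule L2_finite) (use f in \<open>simp add: supp_G_def\<close>)
  have "supp_G G f \<noteq> {}" using f(2) by auto
  then obtain x where x: "x \<in> supp_G G f" by blast
  have np: "norm2sq G f > 0" by (rule norm2sq_pos[OF fL]) (use x in \<open>auto simp: supp_G_def\<close>)
  define A where "A = (real Q)\<^sup>2 * C * real (k+1) * max 1 (Finv (2*V))"
  have Ap: "A > 0" using Acoef_pos by (simp add: A_def)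
  have "norm2sq G f \<le> A * dirichlet G mu f" using core[OF f(1) V f(3)] by (simp add: A_def)
  then show "1 / A \<le> r" using np Ap unfolding r by (simp add: field_simps)
qed

lemma part1: "dom_real (\<lambda>t. 1 / Finv t) (spectral_profile G mu)"
  unfolding dom_real_def
proof (intro exI conjI allI impI)
  define A where "A = (real Q)\<^sup>2 * C * real (k+1)"
  have Ap: "A > 0" using Acoef_pos by (simp add: A_def)
  have F1: "Finv 1 > 0" by (rule Finv_pos) simp
  define c1 where "c1 = A * (1 + max 1 (Finv 2) / Finv 1)"
  have c1p: "c1 > 0" using Ap F1 by (simp add: c1_def add_pos_nonneg)
  then show "c1 > 0" .
  show "(1/2::real) > 0" by simp
  fix t :: real assume t: "t \<ge> 1"
  define V where "V = max (1/2 * t) 1"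
  have V1: "V \<ge> 1" by (simp add: V_def)
  have V2: "2 * V = max t 2" by (simp add: V_def max_def)
  have Ft: "Finv t \<ge> Finv 1" by (rule Finv_mono) (use t in auto)
  define M where "M = max 1 (Finv (2*V))"
  have M1: "M \<ge> 1" by (simp add: M_def)
  have c1ge: "A * (max 1 (Finv 2) / Finv 1) \<le> c1"
    using Ap by (simp add: c1_def ring_distribs)
  have key: "A * M \<le> c1 * Finv t"
  proof (cases "t \<ge> 2")
    case True
    then have M: "M = max 1 (Finv t)" by (simp add: M_def V2)
    show ?thesis
    proof (cases "Finv t \<ge> 1")
      case True
      then have "A * M = A * Finv t" using M by simp
      also have "\<dots> \<le> c1 * Finv t" using Ap F1 True by (intro mult_right_mono) (auto simp: c1_def)
      finally show ?thesis .
    next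
      case False
      then have "A * M = A" using M by simp
      also have "\<dots> \<le> A * (max 1 (Finv 2) / Finv 1) * Finv 1" using F1 Ap by simp
      also have "\<dots> \<le> c1 * Finv t"
        using Ft Ap F1 c1ge c1p by (intro mult_mono) auto
      finally show ?thesis .
    qed
  next
    case False
    then have M: "M = max 1 (Finv 2)" by (simp add: M_def V2)
    have "A * M = A * (max 1 (Finv 2) / Finv 1) * Finv 1" using F1 M by simp
    also have "\<dots> \<le> c1 * Finv t"
      using Ft Ap F1 c1ge c1p by (intro mult_mono) auto
    finally show ?thesis .
  qed
  have Ftp: "Finv t > 0" by (rule Finv_pos) (use t in auto)
  have "1 / Finv t \<le> c1 * (1 / (A * M))"
    using key Ftp Ap M1 by (simp add: field_simps)
  also have "\<dots> \<le> c1 * spectral_profile G mu V"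
    using profile_lower[OF V1] Ap F1 by (intro mult_left_mono) (auto simp: A_def M_def c1_def add_pos_nonneg)
  finally show "1 / Finv t \<le> c1 * spectral_profile G mu (max (1/2 * t) 1)" by (simp add: V_def)
qed

end


context mainctx begin

abbreviation ww :: "nat \<Rightarrow> real" where "ww n \<equiv> conv_pow G mu (n + n) \<one>"

lemma ww_props: "0 < ww n" "ww n \<le> 1"
  and ww_rec: "ww (Suc n) \<le> ww n - ww n / (4 * ((real Q)\<^sup>2 * C * real (k+1)) * max 1 (Finv (32 / ww n)))"
proof -
  interpret mp: spm G mu by (rule spm_mu)
  define A where "A = (real Q)\<^sup>2 * C * real (k+1)"
  have Ap: "A > 0" using Acoef_pos by (simp add: A_def)
  show w1: "ww n \<le> 1" by (rule mp.u_le1) simp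
  have wip: "ww n = norm2sq G (mp.u n)" using mp.ip_u[of n n] by (simp add: norm2sq_ip)
  show wpos: "0 < ww n"
  proof -
    have "\<exists>x\<in>carrier G. mp.u n x \<noteq> 0"
    proof (rule ccontr)
      assume "\<not> ?thesis"
      then have "infsum (mp.u n) (carrier G) = 0" by (intro infsum_0) auto
      then show False using mp.u_has_sum[of n] by (simp add: has_sum_iff)
    qed
    then obtain x where "x \<in> carrier G" "mp.u n x \<noteq> 0" by blast
    then show ?thesis using norm2sq_pos[OF mp.u_L2] wip by auto
  qed
  define s where "s = (\<lambda>x. mp.u n x + mp.u (Suc n) x)"
  have sL: "s \<in> L2 G" unfolding s_def by (intro L2_add mp.u_L2)
  have snn: "\<And>x. x \<in> carrier G \<Longrightarrow> 0 \<le> s x" unfolding s_def using mp.u_nonneg by (intro add_nonneg_nonneg) blast+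
  have shs: "(s has_sum 2) (carrier G)"
    using has_sum_add[OF mp.u_has_sum[of n] mp.u_has_sum[of "Suc n"]] unfolding s_def by simp
  have d1: "dirichlet G mu s \<le> 2 * (ww n - ww (Suc n))"
    using mp.decay_step(1)[of n] unfolding s_def by simp
  have d2: "ww n \<le> norm2sq G s"
    using mp.decay_step(2)[of n] unfolding s_def by simp
  define t where "t = ww n / 8"
  have tp: "t > 0" using wpos by (simp add: t_def)
  define g where "g = (\<lambda>x. max (s x - t) 0)"
  note tr = mp.trunc[OF snn sL shs tp, folded g_def]
  define V where "V = 16 / ww n"
  have V1: "V \<ge> 1" using wpos w1 by (simp add: V_def field_simps)
  have cV: "real (card (supp_G G g)) \<le> V" using tr(5) by (simp add: V_def t_def)
  have core': "norm2sq G g \<le> A * max 1 (Finv (2*V)) * dirichlet G mu g"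
    using core[OF tr(4) V1 cV] by (simp add: A_def)
  define M where "M = max 1 (Finv (32 / ww n))"
  have M1: "M \<ge> 1" by (simp add: M_def)
  have "2 * V = 32 / ww n" by (simp add: V_def)
  then have core'': "norm2sq G g \<le> A * M * dirichlet G mu g" using core' by (simp add: M_def)
  have "ww n / 2 \<le> norm2sq G g" using tr(3) d2 by (simp add: t_def)
  also have "\<dots> \<le> A * M * dirichlet G mu g" by (rule core'')
  also have "\<dots> \<le> A * M * dirichlet G mu s"
    using tr(2) Ap M1 by (intro mult_left_mono) auto
  also have "\<dots> \<le> A * M * (2 * (ww n - ww (Suc n)))"
    using d1 Ap M1 by (intro mult_left_mono) auto
  finally have "ww n / 2 \<le> A * M * (2 * (ww n - ww (Suc n)))" .
  then have "ww n / (4 * A * M) \<le> ww n - ww (Suc n)"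
    using Ap M1 by (simp add: field_simps)
  then show "ww (Suc n) \<le> ww n - ww n / (4 * ((real Q)\<^sup>2 * C * real (k+1)) * max 1 (Finv (32 / ww n)))"
    by (simp add: A_def M_def)
qed

end


locale decay_seq =
  fixes w :: "nat \<Rightarrow> real" and \<Phi> :: "real \<Rightarrow> real"
  assumes pos: "\<And>n. 0 < w n" and le1: "\<And>n. w n \<le> 1"
    and rec: "\<And>n. w (Suc n) \<le> w n - w n / \<Phi> (1 / w n)"
    and \<Phi>1: "\<And>y. y \<ge> 1 \<Longrightarrow> \<Phi> y \<ge> 1"
    and \<Phi>mono: "\<And>x y. 1 \<le> x \<Longrightarrow> x \<le> y \<Longrightarrow> \<Phi> x \<le> \<Phi> y"
begin

lemma inv_ge1: "1 / w n \<ge> 1"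
  using pos[of n] le1[of n] by (simp add: field_simps)

lemma step_le: "w (Suc n) \<le> w n"
proof -
  have "\<Phi> (1 / w n) \<ge> 1" by (rule \<Phi>1[OF inv_ge1])
  then have "w n / \<Phi> (1 / w n) \<ge> 0" using pos[of n] by simp
  then show ?thesis using rec[of n] by linarith
qed

lemma w_mono: "m \<le> n \<Longrightarrow> w n \<le> w m"
proof (induction n rule: dec_induct)
  case (step n)
  then show ?case using step_le[of n] by linarith
qed simp

lemma band:
  assumes b: "0 < b" "b \<le> 1"
  shows "w (n + l) \<le> max b (w n - real l * (b / \<Phi> (1 / b)))"
proof (induction l)
  case 0 then show ?case by simp
next
  case (Suc l)
  define c where "c = b / \<Phi> (1 / b)"
  have ib: "1 / b \<ge> 1" using b by (simp add: field_simps)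
  have Pb: "\<Phi> (1 / b) \<ge> 1" by (rule \<Phi>1[OF ib])
  show ?case
  proof (cases "w (n + l) > b")
    case True
    have iw: "1 / w (n + l) \<le> 1 / b" using True b by (simp add: frac_le)
    have Pw: "\<Phi> (1 / w (n + l)) \<le> \<Phi> (1 / b)" by (rule \<Phi>mono[OF inv_ge1 iw])
    have Pw1: "\<Phi> (1 / w (n + l)) \<ge> 1" by (rule \<Phi>1[OF inv_ge1])
    have "c \<le> w (n + l) / \<Phi> (1 / b)" unfolding c_def using True Pb by (simp add: divide_right_mono)
    also have "\<dots> \<le> w (n + l) / \<Phi> (1 / w (n + l))"
      using Pw Pw1 pos[of "n+l"] by (simp add: frac_le)
    finally have "w (Suc (n + l)) \<le> w (n + l) - c" using rec[of "n + l"] by linarith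
    moreover have "w (n + l) \<le> w n - real l * c"
      using Suc True unfolding c_def by linarith
    moreover have "real (Suc l) * c = real l * c + c" by (simp add: algebra_simps)
    ultimately have "w (n + Suc l) \<le> w n - real (Suc l) * c" by simp
    then show ?thesis unfolding c_def by (meson max.coboundedI2)
  next
    case False
    then show ?thesis using step_le[of "n + l"] by simp
  qed
qed

definition NN :: "nat \<Rightarrow> nat" where
  "NN J = (\<Sum>j<J. nat \<lceil>\<Phi> (2 ^ (Suc j))\<rceil>)"

lemma levels: "n \<ge> NN J \<Longrightarrow> w n \<le> 1 / 2 ^ J"
proof (induction J arbitrary: n)
  case 0
  then show ?case using le1 by simp
next
  case (Suc J)
  define b :: real where "b = 1 / 2 ^ Suc J"
  have p1: "(1::real) \<le> 2 ^ Suc J" by (induction J) auto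
  have b: "0 < b" "b \<le> 1" using p1 by (auto simp: b_def)
  define L where "L = nat \<lceil>\<Phi> (2 ^ (Suc J))\<rceil>"
  have ib: "1 / b = 2 ^ Suc J" by (simp add: b_def)
  have P: "\<Phi> (1 / b) \<ge> 1" unfolding ib by (rule \<Phi>1[OF p1])
  have wN: "w (NN J) \<le> 2 * b" using Suc.IH[of "NN J"] by (simp add: b_def)
  have "w (NN J + L) \<le> max b (w (NN J) - real L * (b / \<Phi> (1 / b)))"
    by (rule band[OF b])
  moreover have "real L * (b / \<Phi> (1 / b)) \<ge> b"
  proof -
    have "real L \<ge> \<Phi> (1 / b)" unfolding L_def ib by linarith
    then have "real L * (b / \<Phi> (1 / b)) \<ge> \<Phi> (1 / b) * (b / \<Phi> (1 / b))"
      using b P by (intro mult_right_mono) auto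
    then show ?thesis using P by simp
  qed
  ultimately have "w (NN J + L) \<le> b" using wN by linarith
  moreover have "NN (Suc J) = NN J + L" by (simp add: NN_def L_def)
  ultimately show ?case using w_mono[of "NN J + L" n] Suc.prems by (simp add: b_def)
qed

end

lemma geo_sum:
  fixes c :: "nat \<Rightarrow> real" and lam :: real
  assumes c1: "\<And>j. c j \<ge> 1" and lam: "lam > 1" and grow: "\<And>j. j \<ge> j0 \<Longrightarrow> c (Suc j) \<ge> lam * c j"
  shows "\<exists>B0>0. \<forall>J. (\<Sum>j\<le>J. c j) \<le> B0 * c J"
proof -
  define B0 where "B0 = (\<Sum>j\<le>j0. c j) + lam / (lam - 1)"
  have S0: "(\<Sum>j\<le>j0. c j) \<ge> 0" using c1 by (intro sum_nonneg) (auto intro: order_trans[OF zero_le_one])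
  have lp: "lam / (lam - 1) > 0" using lam by simp
  have B0p: "B0 > 0" using S0 lp by (simp add: B0_def)
  have "(\<Sum>j\<le>J. c j) \<le> B0 * c J" for J
  proof (induction J)
    case 0
    have "(\<Sum>j\<le>0. c j) \<le> (\<Sum>j\<le>j0. c j)"
      by (rule sum_mono2) (use c1 in \<open>auto intro: order_trans[OF zero_le_one]\<close>)
    also have "\<dots> \<le> B0" using lp by (simp add: B0_def)
    also have "\<dots> \<le> B0 * c 0" using B0p c1[of 0] by simp
    finally show ?case .
  next
    case (Suc J)
    show ?case
    proof (cases "Suc J \<le> j0")
      case True
      have "(\<Sum>j\<le>Suc J. c j) \<le> (\<Sum>j\<le>j0. c j)"
        by (rule sum_mono2) (use c1 True in \<open>auto intro: order_trans[OF zero_le_one]\<close>)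
      also have "\<dots> \<le> B0" using lp by (simp add: B0_def)
      also have "\<dots> \<le> B0 * c (Suc J)" using B0p c1[of "Suc J"] by simp
      finally show ?thesis .
    next
      case False
      then have g: "c (Suc J) \<ge> lam * c J" using grow by simp
      have cJ: "c J \<le> c (Suc J) / lam" using g lam by (simp add: field_simps)
      have "(\<Sum>j\<le>Suc J. c j) = (\<Sum>j\<le>J. c j) + c (Suc J)" by simp
      also have "\<dots> \<le> B0 * c J + c (Suc J)" using Suc.IH by simp
      also have "\<dots> \<le> B0 * (c (Suc J) / lam) + c (Suc J)"
      proof -
        have "B0 * c J \<le> B0 * (c (Suc J) / lam)" by (rule mult_left_mono[OF cJ]) (use B0p in simp)
        then show ?thesis by simp
      qed
      also have "\<dots> \<le> B0 * c (Suc J)"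
      proof -
        have "B0 \<ge> lam / (lam - 1)" using S0 by (simp add: B0_def)
        then have "B0 * (lam - 1) \<ge> lam" using lam by (simp add: field_simps)
        then have "B0 / lam + 1 \<le> B0" using lam by (simp add: field_simps)
        then have "(B0 / lam + 1) * c (Suc J) \<le> B0 * c (Suc J)"
          using c1[of "Suc J"] by (intro mult_right_mono) (auto intro: order_trans[OF zero_le_one])
        then show ?thesis by (simp add: algebra_simps)
      qed
      finally show ?thesis .
    qed
  qed
  then show ?thesis using B0p by blast
qed



context mainctx begin

lemma Finv_doubling: "\<exists>lam>1. \<exists>r0>0. \<forall>r\<ge>r0. Finv (2 * r) \<ge> lam * Finv r"
proof -
  define lam :: real where "lam = 2 powr (1 / (2 * \<gamma>))"
  have lam1: "lam > 1" unfolding lam_def using gpos by (intro gr_one_powr) auto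
  have "lam powr \<gamma> = 2 powr (1/2)"
    unfolding lam_def using gpos by (simp add: powr_powr)
  also have "\<dots> < 2 powr 1" by (rule powr_less_mono) auto
  finally have lg: "lam powr \<gamma> < 2" by simp
  have "((\<lambda>t. F (lam * t) / F t) \<longlongrightarrow> lam powr \<gamma>) at_top"
    using Freg lam1 unfolding regularly_varying_def by auto
  from order_tendstoD(2)[OF this lg]
  obtain N where N: "\<And>t. t \<ge> N \<Longrightarrow> F (lam * t) / F t < 2"
    by (auto simp: eventually_at_top_linorder)
  define t0 where "t0 = max N 1"
  have t0: "t0 \<ge> 1" "t0 \<ge> N" by (auto simp: t0_def)
  define r0 where "r0 = F t0"
  have r0p: "r0 > 0" using Fpos t0 by (simp add: r0_def)
  have "\<forall>r\<ge>r0. Finv (2 * r) \<ge> lam * Finv r"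
  proof (intro allI impI)
    fix r assume r: "r \<ge> r0"
    have rp: "r > 0" using r r0p by linarith
    define t where "t = Finv r"
    have tp: "t > 0" using Finv_pos[OF rp] by (simp add: t_def)
    have "t \<ge> t0" using Finv_mono[OF r0p r] Finv_F[of t0] t0 by (simp add: t_def r0_def)
    then have "F (lam * t) / F t < 2" using N t0 by auto
    moreover have Ft: "F t = r" using F_Finv[OF rp] by (simp add: t_def)
    ultimately have Fl: "F (lam * t) < 2 * r" using rp by (simp add: field_simps)
    show "Finv (2 * r) \<ge> lam * Finv r"
    proof (rule ccontr)
      assume "\<not> ?thesis"
      then have "Finv (2 * r) < lam * t" by (simp add: t_def)
      then have "F (Finv (2 * r)) \<le> F (lam * t)"
        using Finv_pos[of "2*r"] rp by (intro F_mono) auto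
      then show False using F_Finv[of "2*r"] rp Fl by simp
    qed
  qed
  then show ?thesis using lam1 r0p by blast
qed

definition cc :: "nat \<Rightarrow> real" where "cc j = max 1 (Finv (32 * 2 ^ j))"

lemma cc_grow: "\<exists>lam>1. \<exists>j0. \<forall>j\<ge>j0. cc (Suc j) \<ge> lam * cc j"
proof -
  obtain lam r0 where lam: "lam > 1" and r0: "r0 > 0" and dbl: "\<And>r. r \<ge> r0 \<Longrightarrow> Finv (2 * r) \<ge> lam * Finv r"
    using Finv_doubling by blast
  obtain j0 where j0: "max r0 (F 1) < 2 ^ j0" using real_arch_pow[of 2 "max r0 (F 1)"] by auto
  have "\<forall>j\<ge>j0. cc (Suc j) \<ge> lam * cc j"
  proof (intro allI impI)
    fix j assume j: "j \<ge> j0"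
    define r :: real where "r = 32 * 2 ^ j"
    have p: "(2::real) ^ j0 \<le> 2 ^ j" using j by (intro power_increasing) auto
    have q: "(0::real) \<le> 2 ^ j" by simp
    have j0': "r0 < 2 ^ j0" "F 1 < 2 ^ j0" using j0 by auto
    have rge: "r \<ge> r0" "r \<ge> F 1" unfolding r_def using p q j0' by linarith+
    have F1p: "F 1 > 0" using Fpos by simp
    have "Finv r \<ge> Finv (F 1)" by (rule Finv_mono[OF F1p rge(2)])
    then have Fr1: "Finv r \<ge> 1" using Finv_F[of 1] by simp
    have "cc j = Finv r" using Fr1 by (simp add: cc_def r_def)
    moreover have "cc (Suc j) \<ge> Finv (2 * r)" by (simp add: cc_def r_def mult.left_commute)
    ultimately show "cc (Suc j) \<ge> lam * cc j" using dbl[OF rge(1)] by simp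
  qed
  then show ?thesis using lam by blast
qed

lemma cc_sum: "\<exists>B0>0. \<forall>J. (\<Sum>j\<le>J. cc j) \<le> B0 * cc J"
proof -
  obtain lam j0 where lam: "lam > 1" and g: "\<And>j. j \<ge> j0 \<Longrightarrow> cc (Suc j) \<ge> lam * cc j"
    using cc_grow by blast
  show ?thesis by (rule geo_sum[where c=cc, OF _ lam g]) (simp add: cc_def)
qed

definition aa :: real where "aa = max 1 (4 * ((real Q)\<^sup>2 * C * real (k+1)))"

definition Phi :: "real \<Rightarrow> real" where "Phi y = aa * max 1 (Finv (32 * y))"

lemma ds: "decay_seq ww Phi"
proof
  fix n
  show "0 < ww n" "ww n \<le> 1" by (rule ww_props)+
  define A where "A = (real Q)\<^sup>2 * C * real (k+1)"
  have Ap: "A > 0" using Acoef_pos by (simp add: A_def)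
  define M where "M = max 1 (Finv (32 / ww n))"
  have M1: "M \<ge> 1" by (simp add: M_def)
  have "Phi (1 / ww n) = aa * M" by (simp add: Phi_def M_def)
  moreover have "aa \<ge> 4 * A" by (simp add: aa_def A_def)
  ultimately have Pge: "Phi (1 / ww n) \<ge> 4 * A * M" using M1 by (simp add: mult_right_mono)
  have "ww n / Phi (1 / ww n) \<le> ww n / (4 * A * M)"
    by (rule frac_le) (use Pge ww_props(1)[of n] Ap M1 in auto)
  then show "ww (Suc n) \<le> ww n - ww n / Phi (1 / ww n)"
    using ww_rec[of n] by (simp add: A_def M_def)
next
  fix y :: real assume "y \<ge> 1"
  have "(1::real) * 1 \<le> aa * max 1 (Finv (32 * y))"
    by (intro mult_mono) (auto simp: aa_def)
  then show "Phi y \<ge> 1" unfolding Phi_def by simp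
next
  fix x y :: real assume xy: "1 \<le> x" "x \<le> y"
  have "Finv (32 * x) \<le> Finv (32 * y)" by (rule Finv_mono) (use xy in auto)
  then show "Phi x \<le> Phi y" unfolding Phi_def aa_def
    by (intro mult_left_mono) auto
qed

end


context mainctx begin

lemma NN_bound: "\<exists>B>0. \<forall>J. real (decay_seq.NN Phi J) \<le> B * cc J"
proof -
  interpret D: decay_seq ww Phi by (rule ds)
  obtain B0 where B0: "B0 > 0" "\<And>J. (\<Sum>j\<le>J. cc j) \<le> B0 * cc J" using cc_sum by blast
  have aa1: "aa \<ge> 1" by (simp add: aa_def)
  have cc1: "\<And>j. cc j \<ge> 1" by (simp add: cc_def)
  have "real (decay_seq.NN Phi J) \<le> (2 * aa * B0) * cc J" for J
  proof -
    have Ph: "Phi (2 ^ Suc j) = aa * cc (Suc j)" for j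
      by (simp add: Phi_def cc_def mult.left_commute)
    have nd: "decay_seq.NN Phi J = (\<Sum>j<J. nat \<lceil>Phi (2 ^ Suc j)\<rceil>)"
      by (rule decay_seq.NN_def[OF ds])
    have "real (decay_seq.NN Phi J) = (\<Sum>j<J. real (nat \<lceil>Phi (2 ^ Suc j)\<rceil>))"
      unfolding nd of_nat_sum ..
    also have "\<dots> \<le> (\<Sum>j<J. 2 * aa * cc (Suc j))"
    proof (rule sum_mono)
      fix j
      have "aa * cc (Suc j) \<ge> 1 * 1" using aa1 cc1[of "Suc j"] by (intro mult_mono) auto
      then show "real (nat \<lceil>Phi (2 ^ Suc j)\<rceil>) \<le> 2 * aa * cc (Suc j)"
        unfolding Ph by linarith
    qed
    also have "\<dots> = 2 * aa * (\<Sum>j<J. cc (Suc j))" by (simp add: sum_distrib_left)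
    also have "\<dots> \<le> 2 * aa * (\<Sum>j\<le>J. cc j)"
    proof -
      have "(\<Sum>j\<le>J. cc j) = cc 0 + (\<Sum>j<J. cc (Suc j))"
        by (induction J) auto
      then have "(\<Sum>j<J. cc (Suc j)) \<le> (\<Sum>j\<le>J. cc j)" using cc1[of 0] by linarith
      then show ?thesis using aa1 by (intro mult_left_mono) auto
    qed
    also have "\<dots> \<le> 2 * aa * (B0 * cc J)" using B0(2)[of J] aa1 by (intro mult_left_mono) auto
    finally show ?thesis by simp
  qed
  moreover have "2 * aa * B0 > 0" using aa1 B0(1) by simp
  ultimately show ?thesis by blast
qed

lemma part2: "dom_nat (\<lambda>n. conv_pow G mu (2 * n) \<one>) (\<lambda>n. 1 / F (real n))"
proof -
  interpret D: decay_seq ww Phi by (rule ds)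
  obtain B' where B': "B' > 0" "\<And>J. real (D.NN J) \<le> B' * cc J" using NN_bound by blast
  define B where "B = max 1 B'"
  have B1: "B \<ge> 1" by (simp add: B_def)
  have lev: "ww n \<le> 1 / 2 ^ J" if "real n \<ge> B * cc J" for n J
  proof -
    have "B' * cc J \<le> B * cc J" using cc_def by (intro mult_right_mono) (auto simp: B_def)
    then have "real (D.NN J) \<le> real n" using B'(2)[of J] that by linarith
    then show ?thesis by (intro D.levels) simp
  qed
  define c1 where "c1 = max 64 (F 1)"
  define c2 where "c2 = 1 / (2 * B)"
  have F1: "F 1 > 0" using Fpos by simp
  show ?thesis unfolding dom_nat_def
  proof (intro exI conjI allI impI)
    show "c1 > 0" by (simp add: c1_def)
    show "c2 > 0" using B1 by (simp add: c2_def)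
    fix n :: nat assume n: "n \<ge> 1"
    define mm where "mm = max 1 (nat \<lceil>c2 * real n\<rceil>)"
    have wn: "conv_pow G mu (2 * n) \<one> = ww n" by (simp add: mult_2)
    show "conv_pow G mu (2 * n) \<one> \<le> c1 * (1 / F (real (max 1 (nat \<lceil>c2 * real n\<rceil>))))"
      unfolding wn mm_def[symmetric]
    proof (cases "real n \<le> 2 * B")
      case True
      have "c2 * real n \<le> 1" using True B1 by (simp add: c2_def field_simps)
      then have "mm = 1" by (simp add: mm_def)
      moreover have "ww n \<le> 1" by (rule ww_props)
      moreover have "1 \<le> c1 / F 1" using F1 by (simp add: c1_def field_simps)
      ultimately show "ww n \<le> c1 * (1 / F (real mm))" by simp
    next
      case False
      then have nB: "real n > 2 * B" by simp
      define P where "P = (\<lambda>J::nat. 1 / 2 ^ J < ww n)"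
      have nP0: "\<not> P 0" using ww_props(2)[of n] by (simp add: P_def)
      have exP: "\<exists>J. P J"
      proof -
        obtain J where "1 / ww n < 2 ^ J" using real_arch_pow[of 2 "1 / ww n"] by auto
        then have "P J" using ww_props(1)[of n] by (simp add: P_def field_simps)
        then show ?thesis by blast
      qed
      obtain J0 where J0: "\<not> P J0" "P (Suc J0)" using exists_least_lemma[OF nP0 exP] by blast
      define J where "J = Suc J0"
      have up: "ww n \<le> 2 / 2 ^ J" using J0(1) by (simp add: P_def J_def)
      have "\<not> real n \<ge> B * cc J"
        using lev[of J n] J0(2) by (auto simp: P_def J_def)
      then have nlt: "real n < B * cc J" by simp
      then have "B * 2 < B * cc J" using nB by linarith
      then have "cc J > 2" using B1 by simp
      then have ccJ: "cc J = Finv (32 * 2 ^ J)" by (simp add: cc_def)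
      have nBp: "real n / B > 0" using n B1 by simp
      have "real n / B < Finv (32 * 2 ^ J)" using nlt B1 ccJ by (simp add: field_simps)
      then have "F (real n / B) < F (Finv (32 * 2 ^ J))" by (rule F_less[OF nBp])
      then have FnB: "F (real n / B) < 32 * 2 ^ J"
        using F_Finv[of "32 * 2 ^ J"] by simp
      have FnBp: "F (real n / B) > 0" using Fpos nBp by simp
      have "ww n \<le> 64 / (32 * 2 ^ J)" using up by simp
      also have "\<dots> \<le> 64 / F (real n / B)"
        using FnB FnBp by (intro divide_left_mono) auto
      also have "\<dots> \<le> 64 / F (real mm)"
      proof -
        have c2n: "c2 * real n > 1" using nB B1 by (simp add: c2_def field_simps)
        then have mm: "real mm = real (nat \<lceil>c2 * real n\<rceil>)" by (simp add: mm_def)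
        have "real (nat \<lceil>c2 * real n\<rceil>) = real_of_int \<lceil>c2 * real n\<rceil>" using c2n by simp
        moreover have "real_of_int \<lceil>c2 * real n\<rceil> - 1 < c2 * real n" using ceiling_correct by blast
        ultimately have "real mm \<le> c2 * real n + 1" using mm by linarith
        also have "\<dots> < c2 * real n + c2 * real n" using c2n by simp
        also have "\<dots> = real n / B" by (simp add: c2_def field_simps)
        finally have "real mm < real n / B" .
        moreover have "real mm \<ge> 1" by (simp add: mm_def)
        ultimately have "F (real mm) \<le> F (real n / B)" by (intro F_mono) auto
        moreover have "F (real mm) > 0" using Fpos \<open>real mm \<ge> 1\<close> by simp
        ultimately show ?thesis by (intro divide_left_mono) auto
      qed
      also have "\<dots> \<le> c1 * (1 / F (real mm))"
      proof -
        have "F (real mm) > 0" using Fpos by (simp add: mm_def)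
        then show ?thesis by (simp add: c1_def divide_right_mono)
      qed
      finally show "ww n \<le> c1 * (1 / F (real mm))" .
    qed
  qed
qed

end


theorem mainTheorem9:
  fixes G :: "('a, 'b) monoid_scheme"
    and k :: nat
    and mus :: "nat \<Rightarrow> 'a \<Rightarrow> real"
    and C :: real
    and K :: "nat \<Rightarrow> real \<Rightarrow> 'a set"
    and Q :: nat
    and F Finv :: "real \<Rightarrow> real"
    and \<gamma> :: real
  assumes grp: "group G"
    and cnt: "countable (carrier G)"
    and prob: "\<And>i. i \<le> k \<Longrightarrow> prob_meas G (mus i)"
    and symm: "\<And>i. i \<le> k \<Longrightarrow> sym_meas G (mus i)"
    and Cpos: "C > 0"
    and Ksub: "\<And>i R. i \<le> k \<Longrightarrow> R > 0 \<Longrightarrow> K i R \<subseteq> carrier G"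
    and Kineq: "\<And>i R f h. i \<le> k \<Longrightarrow> R > 0 \<Longrightarrow> f \<in> L2 G \<Longrightarrow> h \<in> K i R \<Longrightarrow>
         (\<Sum>\<^sub>\<infinity>x\<in>carrier G. (f (x \<otimes>\<^bsub>G\<^esub> h) - f x)\<^sup>2) \<le> C * R * dirichlet G (mus i) f"
    and Qpos: "Q \<ge> 1"
    and Fpos: "\<And>t. t > 0 \<Longrightarrow> F t > 0"
    and Fmono: "strict_mono_on {0<..} F"
    and Fbij: "bij_betw F {0<..} {0<..}"
    and Finv: "\<And>s. s > 0 \<Longrightarrow> Finv s = inv_into {0<..} F s"
    and gpos: "\<gamma> > 0"
    and Freg: "regularly_varying F \<gamma>"
    and growth: "\<And>R. R \<ge> 1 \<Longrightarrow>
         infinite (set_power G (\<Union>i\<le>k. K i R) Q) \<or>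
         real (card (set_power G (\<Union>i\<le>k. K i R) Q)) \<ge> F R"
  defines "mu \<equiv> (\<lambda>x. (\<Sum>i\<le>k. mus i x) / real (k + 1))"
  shows "dom_real (\<lambda>t. 1 / Finv t) (spectral_profile G mu)
       \<and> dom_nat (\<lambda>n. conv_pow G mu (2 * n) \<one>\<^bsub>G\<^esub>) (\<lambda>n. 1 / F (real n))"
proof -
  have M: "mainctx G k mus C K Q F Finv \<gamma>"
  proof (rule mainctx.intro[OF grp], rule mainctx_axioms.intro)
  qed (fact prob symm Cpos Ksub Kineq Qpos Fpos Fmono Fbij Finv gpos Freg growth)+
  have mu: "mainctx.mu k mus = mu"
    unfolding mu_def by (rule mainctx.mu_def[OF M])
  show ?thesis
    using mainctx.part1[OF M] mainctx.part2[OF M] unfolding mu by blast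
qed

end
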